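(* Let $n\in\mathbb{N}$, $1\le r<n$, and $W_0\in\mathbb{R}^{n\times n}$ with $\operatorname{Tr}(W_0)\neq 0$; assume the LoRA gradient-descent iterates for $\min_{B\in\mathbb{R}^{n\times r},A\in\mathbb{R}^{r\times n}}\frac12\operatorname{Tr}^2(W_0-BA)$ remain uniformly bounded. Let $X_0\in\mathbb{R}^{r\times n}$ with $\|X_0\|\neq 0$ and $Y_0=\mathbf{0}_{n\times r}$. Let $U$ solve $U'(t)=\operatorname{Tr}(W_0-U(t))I_n$, $U(0)=Y_0X_0$, and let $(Y,X)$ solve $Y'=\operatorname{Tr}(W_0-YX)X^T$, $X'=\operatorname{Tr}(W_0-YX)Y^T$, $Y(0)=Y_0$, $X(0)=X_0$. Then $$\lim_{t\to\infty}\frac{\|Y(t)X(t)-U(t)\|}{\|U(t)\|}=\frac{\sqrt{n\|X_0^TX_0\|^2-\|X_0\|^4}}{\|X_0\|^2}.$$ Moreover, if the entries of $X_0$ are drawn i.i.d. from $\mathcal{N}(0,\sigma^2)$ with $\sigma^2>0$, then $$\mathbb{E}\left[\lim_{t\to\infty}\frac{\|Y(t)X(t)-U(t)\|^2}{\|U(t)\|^2}\right]=\frac{n^2+n-2}{nr+2},\qquad \mathbb{E}\left[\lim_{t\to\infty}\frac{\|Y(t)X(t)-U(t)\|}{\|U(t)\|}\right]\le\sqrt{\frac{n^2+n-2}{nr+2}}.$$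
   Context: $\operatorname{Tr}^2(W):=(\operatorname{Tr}W)^2$; $\|\cdot\|$ is the Frobenius norm. "LoRA gradient-descent iterates" are the iterates of fixed-step gradient descent on the factors $B,A$ of $g(B,A)=\frac12\operatorname{Tr}^2(W_0-BA)$; uniform boundedness means their Frobenius norms are bounded independently of step size and iteration. The expectations are over the random initialization $X_0$. *)

theory Defs
  imports "HOL-Analysis.Analysis" "HOL-Probability.Probability"
begin

text \<open>Frobenius norm of a matrix of type real^'c^'r is the library norm (L2 norm of all entries).\<close>

text \<open>LoRA gradient-descent iterates with step size eta on
  g(B,A) = 1/2 (trace (W0 - B A))^2, started at (B0, A0).
  grad_B g = - trace(W0 - B A) A^T,  grad_A g = - trace(W0 - B A) B^T.\<close>
fun lora_gd :: "real^'n^'n \<Rightarrow> real \<Rightarrow> real^'r^'n \<Rightarrow> real^'n^'r \<Rightarrow> nat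
                 \<Rightarrow> (real^'r^'n) \<times> (real^'n^'r)" where
  "lora_gd W0 eta B0 A0 0 = (B0, A0)"
| "lora_gd W0 eta B0 A0 (Suc k) =
     (let (B, A) = lora_gd W0 eta B0 A0 k; c = trace (W0 - B ** A)
      in (B + (eta * c) *\<^sub>R transpose A, A + (eta * c) *\<^sub>R transpose B))"

definition lora_gd_bounded :: "real^'n^'n \<Rightarrow> real^'r^'n \<Rightarrow> real^'n^'r \<Rightarrow> bool" where
  "lora_gd_bounded W0 B0 A0 \<longleftrightarrow>
     (\<exists>eta0 > 0. \<exists>C. \<forall>eta \<in> {0<..eta0}. \<forall>k.
        norm (fst (lora_gd W0 eta B0 A0 k)) \<le> C \<and> norm (snd (lora_gd W0 eta B0 A0 k)) \<le> C)"

definition full_flow :: "real^'n^'n \<Rightarrow> real^'n^'n \<Rightarrow> (real \<Rightarrow> real^'n^'n) \<Rightarrow> bool" where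
  "full_flow W0 U0 U \<longleftrightarrow> U 0 = U0 \<and>
     (\<forall>t\<ge>0. (U has_vector_derivative (trace (W0 - U t) *\<^sub>R mat 1)) (at t within {0..}))"

definition lora_flow :: "real^'n^'n \<Rightarrow> real^'r^'n \<Rightarrow> real^'n^'r
      \<Rightarrow> (real \<Rightarrow> real^'r^'n) \<Rightarrow> (real \<Rightarrow> real^'n^'r) \<Rightarrow> bool" where
  "lora_flow W0 Y0 X0 Y X \<longleftrightarrow> Y 0 = Y0 \<and> X 0 = X0 \<and>
     (\<forall>t\<ge>0. (Y has_vector_derivative (trace (W0 - Y t ** X t) *\<^sub>R transpose (X t))) (at t within {0..})
          \<and> (X has_vector_derivative (trace (W0 - Y t ** X t) *\<^sub>R transpose (Y t))) (at t within {0..}))"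

text \<open>Law of a random r x n matrix with i.i.d. N(0, sigma^2) entries (sigma = standard deviation).\<close>
definition gauss_matrix :: "real \<Rightarrow> (real^'n^'r) measure" where
  "gauss_matrix \<sigma> = density lborel (\<lambda>X. ennreal (\<Prod>i\<in>UNIV. \<Prod>j\<in>UNIV. normal_density 0 \<sigma> (X $ i $ j)))"

end

theory Submission
  imports Defs
begin



lemma tr_entry: "transpose (A::real^'a^'b) $ i $ j = A $ j $ i"
  by (simp add: transpose_def)
lemma mm_entry: "((A::real^'a^'b) ** (B::real^'c^'a)) $ i $ j = (\<Sum>k\<in>UNIV. A $ i $ k * B $ k $ j)"
  by (simp add: matrix_matrix_mult_def)

lemma vd_entry:
  assumes "(f has_vector_derivative (f'::real^'a^'b)) (at t within S)"
  shows "((\<lambda>s. f s $ i $ j) has_real_derivative (f' $ i $ j)) (at t within S)"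
proof -
  have "((\<lambda>s. f s $ i) has_vector_derivative (f' $ i)) (at t within S)"
    by (rule bounded_linear.has_vector_derivative[OF bounded_linear_vec_nth assms])
  then have "((\<lambda>s. f s $ i $ j) has_vector_derivative (f' $ i $ j)) (at t within S)"
    by (rule bounded_linear.has_vector_derivative[OF bounded_linear_vec_nth])
  then show ?thesis by (simp add: has_real_derivative_iff_has_vector_derivative)
qed

lemma const_deriv0:
  fixes f :: "real \<Rightarrow> real"
  assumes "\<And>t. t \<ge> 0 \<Longrightarrow> (f has_real_derivative 0) (at t within {0..})" "t \<ge> 0"
  shows "f t = f 0"
proof -
  have "\<exists>c. \<forall>x\<in>{0::real..}. f x = c"
    apply (rule has_derivative_zero_constant)
     apply simp
  proof -
    fix x :: real assume "x \<in> {0..}"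
    then have "(f has_derivative (*) 0) (at x within {0..})"
      using assms(1) unfolding has_field_derivative_def by auto
    moreover have "(*) (0::real) = (\<lambda>h. 0)" by auto
    ultimately show "(f has_derivative (\<lambda>h. 0)) (at x within {0..})" by simp
  qed
  then show ?thesis using assms(2) by auto
qed

lemma nonincr_deriv:
  fixes f :: "real \<Rightarrow> real"
  assumes "\<And>t. t \<ge> 0 \<Longrightarrow> (f has_real_derivative f' t) (at t within {0..})" 
    "\<And>t. t \<ge> 0 \<Longrightarrow> f' t \<le> 0" "t \<ge> 0"
  shows "f t \<le> f 0"
proof -
  have "\<exists>x\<in>{0..t}. f t - f 0 = (\<lambda>h. f' x * h) (t - 0)"
    apply (rule mvt_very_simple)
    using assms(3) apply simp
    using assms(1) unfolding has_field_derivative_def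
    by (meson atLeastAtMost_iff atLeast_iff has_derivative_subset subsetI)
  then obtain x where "x \<in> {0..t}" "f t - f 0 = f' x * (t - 0)" by auto
  moreover have "f' x \<le> 0" using assms(2) \<open>x \<in> {0..t}\<close> by auto
  moreover have "f' x * t \<le> 0" using \<open>f' x \<le> 0\<close> assms(3) by (simp add: mult_nonpos_nonneg)
  ultimately show ?thesis by simp
qed

lemma norm_sq_mat: "(norm (M::real^'a^'b))\<^sup>2 = (\<Sum>i\<in>UNIV. \<Sum>j\<in>UNIV. (M$i$j)\<^sup>2)"
  unfolding power2_norm_eq_inner inner_vec_def inner_real_def by (simp add: power2_eq_square)

lemma lora_limit:
  fixes X0 :: "real^'n^'r" and Y :: "real \<Rightarrow> real^'r^'n" and X :: "real \<Rightarrow> real^'n^'r"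
    and W0 :: "real^'n^'n"
  assumes lf: "lora_flow W0 0 X0 Y X" and nz: "X0 \<noteq> 0"
  shows "((\<lambda>t. Y t ** X t) \<longlongrightarrow> (trace W0 / (norm X0)\<^sup>2) *\<^sub>R (transpose X0 ** X0)) at_top"
proof -
  define c where "c t = trace (W0 - Y t ** X t)" for t
  define N where "N = (norm X0)\<^sup>2"
  define a where "a = trace W0"
  have Npos: "N > 0" using nz by (simp add: N_def)
  have Y0: "Y 0 = 0" and X0: "X 0 = X0" using lf by (auto simp: lora_flow_def)
  have dY: "((\<lambda>s. Y s $ i $ k) has_real_derivative c t * X t $ k $ i) (at t within {0..})"
    if "t \<ge> 0" for t i k
  proof -
    have "(Y has_vector_derivative (c t *\<^sub>R transpose (X t))) (at t within {0..})"
      using lf that by (auto simp: lora_flow_def c_def)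
    from vd_entry[OF this, of i k] show ?thesis by (simp add: tr_entry)
  qed
  have dX: "((\<lambda>s. X s $ k $ i) has_real_derivative c t * Y t $ i $ k) (at t within {0..})"
    if "t \<ge> 0" for t i k
  proof -
    have "(X has_vector_derivative (c t *\<^sub>R transpose (Y t))) (at t within {0..})"
      using lf that by (auto simp: lora_flow_def c_def)
    from vd_entry[OF this, of k i] show ?thesis by (simp add: tr_entry)
  qed
  have I1: "Y t $ i $ k * X t $ b $ j - X t $ k $ i * Y t $ j $ b = 0" if "t \<ge> 0" for t i k b j
  proof -
    have "(\<lambda>s. Y s $ i $ k * X s $ b $ j - X s $ k $ i * Y s $ j $ b) t
        = (\<lambda>s. Y s $ i $ k * X s $ b $ j - X s $ k $ i * Y s $ j $ b) 0"
    proof (rule const_deriv0[OF _ that])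
      fix t :: real assume t: "t \<ge> 0"
      show "((\<lambda>s. Y s $ i $ k * X s $ b $ j - X s $ k $ i * Y s $ j $ b) has_real_derivative 0) (at t within {0..})"
        by (auto intro!: derivative_eq_intros dX[OF t] dY[OF t] simp: algebra_simps)
    qed
    then show ?thesis by (simp add: Y0)
  qed
  have I2: "X t $ k $ i * X t $ b $ j - Y t $ i $ k * Y t $ j $ b = X0 $ k $ i * X0 $ b $ j" if "t \<ge> 0" for t i k b j
  proof -
    have "(\<lambda>s. X s $ k $ i * X s $ b $ j - Y s $ i $ k * Y s $ j $ b) t
        = (\<lambda>s. X s $ k $ i * X s $ b $ j - Y s $ i $ k * Y s $ j $ b) 0"
    proof (rule const_deriv0[OF _ that])
      fix t :: real assume t: "t \<ge> 0"
      show "((\<lambda>s. X s $ k $ i * X s $ b $ j - Y s $ i $ k * Y s $ j $ b) has_real_derivative 0) (at t within {0..})"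
        by (auto intro!: derivative_eq_intros dX[OF t] dY[OF t] simp: algebra_simps)
    qed
    then show ?thesis by (simp add: Y0 X0)
  qed
  define T where "T t = (\<Sum>i\<in>UNIV. \<Sum>k\<in>UNIV. Y t $ i $ k * X t $ k $ i)" for t
  define P where "P = transpose X0 ** X0"
  have Ttr: "trace (Y t ** X t) = T t" for t
    by (simp add: T_def trace_def mm_entry)
  have cT: "c t = a - T t" for t by (simp add: c_def a_def trace_sub Ttr)
  have Nsum: "N = (\<Sum>k\<in>UNIV. \<Sum>i\<in>UNIV. (X0 $ k $ i)\<^sup>2)" by (simp add: N_def norm_sq_mat)
  have Nt: "N = (\<Sum>k\<in>UNIV. \<Sum>i\<in>UNIV. (X t $ k $ i)\<^sup>2 - (Y t $ i $ k)\<^sup>2)" if "t \<ge> 0" for t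
    unfolding Nsum using I2[OF that] by (simp add: power2_eq_square)
  have key: "(Y t ** X t) $ i $ j * N = T t * P $ i $ j" if t: "t \<ge> 0" for t i j
  proof -
    have "Y t $ i $ k * X t $ k $ j * N = T t * (X0 $ k $ i * X0 $ k $ j)" for k
    proof -
      have "Y t $ i $ k * X t $ k $ j * N = (\<Sum>b\<in>UNIV. \<Sum>l\<in>UNIV. Y t $ i $ k * X t $ k $ j * ((X t $ b $ l)\<^sup>2 - (Y t $ l $ b)\<^sup>2))"
        by (simp add: Nt[OF t] sum_distrib_left)
      also have "\<dots> = (\<Sum>b\<in>UNIV. \<Sum>l\<in>UNIV. Y t $ l $ b * X t $ b $ l * (X t $ k $ i * X t $ k $ j - Y t $ i $ k * Y t $ j $ k))"
      proof (intro sum.cong refl)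
        fix b l
        have e1: "Y t $ l $ b * X t $ k $ i - X t $ b $ l * Y t $ i $ k = 0" by (rule I1[OF t])
        have e2: "Y t $ l $ b * X t $ k $ j - X t $ b $ l * Y t $ j $ k = 0" by (rule I1[OF t])
        show "Y t $ i $ k * X t $ k $ j * ((X t $ b $ l)\<^sup>2 - (Y t $ l $ b)\<^sup>2) =
          Y t $ l $ b * X t $ b $ l * (X t $ k $ i * X t $ k $ j - Y t $ i $ k * Y t $ j $ k)"
          using e1 e2 by algebra
      qed
      also have "\<dots> = T t * (X t $ k $ i * X t $ k $ j - Y t $ i $ k * Y t $ j $ k)"
        by (subst sum.swap) (simp add: T_def sum_distrib_right)
      also have "\<dots> = T t * (X0 $ k $ i * X0 $ k $ j)" using I2[OF t] by simp
      finally show ?thesis .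
    qed
    then have "(\<Sum>k\<in>UNIV. Y t $ i $ k * X t $ k $ j * N) = (\<Sum>k\<in>UNIV. T t * (X0 $ k $ i * X0 $ k $ j))"
      by simp
    then show ?thesis
      by (simp add: mm_entry P_def tr_entry sum_distrib_left sum_distrib_right)
  qed
  have YXeq: "Y t ** X t = (T t / N) *\<^sub>R P" if "t \<ge> 0" for t
    using key[OF that] Npos by (simp add: vec_eq_iff field_simps)
  define S where "S t = (\<Sum>i\<in>UNIV. \<Sum>k\<in>UNIV. (X t $ k $ i)\<^sup>2 + (Y t $ i $ k)\<^sup>2)" for t
  have SN: "S t \<ge> N" if "t \<ge> 0" for t
  proof -
    have "S t = (\<Sum>k\<in>UNIV. \<Sum>i\<in>UNIV. (X t $ k $ i)\<^sup>2 + (Y t $ i $ k)\<^sup>2)"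
      unfolding S_def by (rule sum.swap)
    also have "\<dots> = (\<Sum>k\<in>UNIV. \<Sum>i\<in>UNIV. ((X t $ k $ i)\<^sup>2 - (Y t $ i $ k)\<^sup>2) + 2 * (Y t $ i $ k)\<^sup>2)"
      by (simp add: algebra_simps)
    also have "\<dots> = N + 2 * (\<Sum>k\<in>UNIV. \<Sum>i\<in>UNIV. (Y t $ i $ k)\<^sup>2)"
      by (simp only: Nt[OF that] sum.distrib sum_distrib_left)
    finally have "S t = N + 2 * (\<Sum>k\<in>UNIV. \<Sum>i\<in>UNIV. (Y t $ i $ k)\<^sup>2)" .
    moreover have "(\<Sum>k\<in>UNIV. \<Sum>i\<in>UNIV. (Y t $ i $ k)\<^sup>2) \<ge> 0" by (intro sum_nonneg) auto
    ultimately show ?thesis by simp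
  qed
  have dT: "(T has_real_derivative c t * S t) (at t within {0..})" if t: "t \<ge> 0" for t
  proof -
    have "(T has_real_derivative (\<Sum>i\<in>UNIV. \<Sum>k\<in>UNIV. c t * X t $ k $ i * X t $ k $ i + c t * Y t $ i $ k * Y t $ i $ k)) (at t within {0..})"
      unfolding T_def[abs_def] by (intro DERIV_sum, rule DERIV_mult[OF dY[OF t] dX[OF t]])
    moreover have "(\<Sum>i\<in>UNIV. \<Sum>k\<in>UNIV. c t * X t $ k $ i * X t $ k $ i + c t * Y t $ i $ k * Y t $ i $ k) = c t * S t"
      by (simp add: S_def sum_distrib_left power2_eq_square algebra_simps)
    ultimately show ?thesis by simp
  qed
  define V where "V t = (T t - a)\<^sup>2 * exp (2 * N * t)" for t
  have VV: "V t \<le> V 0" if "t \<ge> 0" for t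
  proof (rule nonincr_deriv[OF _ _ that])
    fix t :: real assume t: "t \<ge> 0"
    show "(V has_real_derivative (2 * (T t - a) * (c t * S t) * exp (2 * N * t) + (T t - a)\<^sup>2 * (exp (2 * N * t) * (2 * N)))) (at t within {0..})"
      unfolding V_def[abs_def]
      by (auto intro!: derivative_eq_intros dT[OF t] simp: algebra_simps power2_eq_square)
    have "2 * (T t - a) * (c t * S t) * exp (2 * N * t) + (T t - a)\<^sup>2 * (exp (2 * N * t) * (2 * N))
        = - (2 * (T t - a)\<^sup>2 * (S t - N) * exp (2 * N * t))"
      by (simp add: cT power2_eq_square algebra_simps)
    also have "\<dots> \<le> 0" using SN[OF t] by simp
    finally show "2 * (T t - a) * (c t * S t) * exp (2 * N * t) + (T t - a)\<^sup>2 * (exp (2 * N * t) * (2 * N)) \<le> 0" .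
  qed
  have T0: "T 0 = 0" by (simp add: T_def Y0)
  have bnd: "norm (T t - a) \<le> \<bar>a\<bar> * exp (- N * t)" if "t \<ge> 0" for t
  proof -
    have "(T t - a)\<^sup>2 * exp (2 * N * t) \<le> a\<^sup>2" using VV[OF that] by (simp add: V_def T0)
    then have "(T t - a)\<^sup>2 \<le> a\<^sup>2 * exp (- N * t) ^ 2"
      by (simp add: exp_minus field_simps power2_eq_square exp_add[symmetric])
    also have "\<dots> = (\<bar>a\<bar> * exp (- N * t))\<^sup>2" by (simp add: power_mult_distrib)
    finally have h: "(T t - a)\<^sup>2 \<le> (\<bar>a\<bar> * exp (- N * t))\<^sup>2" .
    have "\<bar>T t - a\<bar> \<le> \<bar>a\<bar> * exp (- N * t)"
      by (rule power2_le_imp_le) (use h in simp_all)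
    then show ?thesis by simp
  qed
  have "filterlim (\<lambda>t. N * t) at_top at_top"
    by (rule filterlim_tendsto_pos_mult_at_top[OF tendsto_const Npos filterlim_ident])
  then have "filterlim (\<lambda>t. exp (N * t)) at_top at_top" by (rule filterlim_compose[OF exp_at_top])
  then have "((\<lambda>t. inverse (exp (N * t))) \<longlongrightarrow> 0) at_top" by (rule tendsto_inverse_0_at_top)
  then have "((\<lambda>t. \<bar>a\<bar> * inverse (exp (N * t))) \<longlongrightarrow> 0) at_top" by (rule tendsto_mult_right_zero)
  then have "((\<lambda>t. \<bar>a\<bar> * exp (- N * t)) \<longlongrightarrow> 0) at_top" by (simp add: exp_minus)
  then have "((\<lambda>t. T t - a) \<longlongrightarrow> 0) at_top"
  proof (rule Lim_null_comparison[rotated])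
    show "\<forall>\<^sub>F x in at_top. norm (T x - a) \<le> \<bar>a\<bar> * exp (- N * x)"
      by (rule eventually_at_top_linorderI[of 0]) (rule bnd)
  qed
  then have Tlim: "(T \<longlongrightarrow> a) at_top" by (simp add: LIM_zero_iff)
  have "((\<lambda>t. (T t / N) *\<^sub>R P) \<longlongrightarrow> (a / N) *\<^sub>R P) at_top"
    using Npos by (intro tendsto_intros Tlim) simp
  moreover have "eventually (\<lambda>t. (T t / N) *\<^sub>R P = Y t ** X t) at_top"
    by (intro eventually_at_top_linorderI[of 0]) (simp add: YXeq)
  ultimately show ?thesis unfolding a_def N_def P_def by (rule Lim_transform_eventually)
qed

lemma full_limit:
  fixes U :: "real \<Rightarrow> real^'n^'n" and W0 :: "real^'n^'n"
  assumes ff: "full_flow W0 0 U"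
  shows "(U \<longlongrightarrow> (trace W0 / real CARD('n)) *\<^sub>R mat 1) at_top"
proof -
  define a where "a = trace W0"
  define n where "n = real CARD('n)"
  define \<tau> where "\<tau> t = trace (U t)" for t
  have npos: "n > 0" by (simp add: n_def)
  have U0: "U 0 = 0" using ff by (simp add: full_flow_def)
  have dU: "((\<lambda>s. U s $ i $ j) has_real_derivative (if i = j then a - \<tau> t else 0)) (at t within {0..})"
    if "t \<ge> 0" for t i j
  proof -
    have "(U has_vector_derivative (trace (W0 - U t) *\<^sub>R mat 1)) (at t within {0..})"
      using ff that by (auto simp: full_flow_def)
    from vd_entry[OF this, of i j] show ?thesis by (cases "i = j") (simp_all add: mat_def a_def \<tau>_def trace_sub)
  qed
  have d\<tau>: "(\<tau> has_real_derivative n * (a - \<tau> t)) (at t within {0..})" if t: "t \<ge> 0" for t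
  proof -
    have "((\<lambda>s. \<Sum>i\<in>UNIV. U s $ i $ i) has_real_derivative (\<Sum>i\<in>(UNIV::'n set). a - \<tau> t)) (at t within {0..})"
      by (intro DERIV_sum) (use dU[OF t, where i=i and j=i for i] in simp)
    then show ?thesis by (simp add: \<tau>_def[abs_def] trace_def n_def)
  qed
  have \<tau>eq: "\<tau> t = a - a * exp (- n * t)" if t: "t \<ge> 0" for t
  proof -
    have "(\<lambda>s. (\<tau> s - a) * exp (n * s)) t = (\<lambda>s. (\<tau> s - a) * exp (n * s)) 0"
    proof (rule const_deriv0[OF _ t])
      fix t :: real assume t: "t \<ge> 0"
      show "((\<lambda>s. (\<tau> s - a) * exp (n * s)) has_real_derivative 0) (at t within {0..})"
        by (auto intro!: derivative_eq_intros d\<tau>[OF t] simp: algebra_simps)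
    qed
    moreover have "\<tau> 0 = 0" by (simp add: \<tau>_def U0 trace_def)
    ultimately have "(\<tau> t - a) * exp (n * t) = - a" by simp
    then have "\<tau> t - a = - a * exp (- n * t)"
      by (simp add: exp_minus field_simps)
    then show ?thesis by simp
  qed
  have offd: "U t $ i $ j = 0" if t: "t \<ge> 0" and ij: "i \<noteq> j" for t i j
  proof -
    have "(\<lambda>s. U s $ i $ j) t = (\<lambda>s. U s $ i $ j) 0"
    proof (rule const_deriv0[OF _ t])
      fix t :: real assume "t \<ge> 0"
      from dU[OF this, of i j] ij show "((\<lambda>s. U s $ i $ j) has_real_derivative 0) (at t within {0..})" by simp
    qed
    then show ?thesis by (simp add: U0)
  qed
  have diag: "U t $ i $ i = U t $ j $ j" if t: "t \<ge> 0" for t i j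
  proof -
    have "(\<lambda>s. U s $ i $ i - U s $ j $ j) t = (\<lambda>s. U s $ i $ i - U s $ j $ j) 0"
    proof (rule const_deriv0[OF _ t])
      fix t :: real assume t: "t \<ge> 0"
      show "((\<lambda>s. U s $ i $ i - U s $ j $ j) has_real_derivative 0) (at t within {0..})"
        using DERIV_diff[OF dU[OF t, of i i] dU[OF t, of j j]] by simp
    qed
    then show ?thesis by (simp add: U0)
  qed
  have Ueq: "U t = (\<tau> t / n) *\<^sub>R mat 1" if t: "t \<ge> 0" for t
  proof -
    have "U t $ i $ i = \<tau> t / n" for i
    proof -
      have "\<tau> t = (\<Sum>j\<in>(UNIV::'n set). U t $ i $ i)" unfolding \<tau>_def trace_def
        by (rule sum.cong[OF refl]) (rule diag[OF t])
      then show ?thesis using npos by (simp add: n_def field_simps)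
    qed
    then show ?thesis using offd[OF t] by (simp add: vec_eq_iff mat_def)
  qed
  have "filterlim (\<lambda>t. n * t) at_top at_top"
    by (rule filterlim_tendsto_pos_mult_at_top[OF tendsto_const npos filterlim_ident])
  then have "filterlim (\<lambda>t. exp (n * t)) at_top at_top" by (rule filterlim_compose[OF exp_at_top])
  then have "((\<lambda>t. inverse (exp (n * t))) \<longlongrightarrow> 0) at_top" by (rule tendsto_inverse_0_at_top)
  then have "((\<lambda>t. a - a * inverse (exp (n * t))) \<longlongrightarrow> a - a * 0) at_top" by (intro tendsto_intros)
  then have "((\<lambda>t. a - a * exp (- n * t)) \<longlongrightarrow> a) at_top" by (simp add: exp_minus)
  then have "((\<lambda>t. ((a - a * exp (- n * t)) / n) *\<^sub>R (mat 1::real^'n^'n)) \<longlongrightarrow> (a / n) *\<^sub>R mat 1) at_top"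
    using npos by (intro tendsto_intros) auto
  moreover have "eventually (\<lambda>t. ((a - a * exp (- n * t)) / n) *\<^sub>R (mat 1::real^'n^'n) = U t) at_top"
    by (intro eventually_at_top_linorderI[of 0]) (simp add: Ueq \<tau>eq)
  ultimately show ?thesis unfolding a_def n_def by (rule Lim_transform_eventually)
qed

lemma inner_mat1: "inner (M::real^'n^'n) (mat 1) = trace M"
  by (simp add: inner_vec_def mat_def trace_def inner_real_def if_distrib cong: if_cong)

lemma norm_mat1_sq: "(norm (mat 1 :: real^'n^'n))\<^sup>2 = real CARD('n)"
proof -
  have "((mat 1 :: real^'n^'n)$i$j)\<^sup>2 = (if i = j then 1 else 0)" for i j by (simp add: mat_def)
  then show ?thesis by (simp add: norm_sq_mat)
qed

lemma trace_XtX: "trace (transpose (X0::real^'n^'r) ** X0) = (norm X0)\<^sup>2"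
  unfolding trace_def mm_entry tr_entry norm_sq_mat by (subst sum.swap) (simp add: power2_eq_square)

lemma ratio_limit:
  fixes X0 :: "real^'n^'r" and Y :: "real \<Rightarrow> real^'r^'n" and X :: "real \<Rightarrow> real^'n^'r"
    and W0 :: "real^'n^'n" and U :: "real \<Rightarrow> real^'n^'n"
  assumes lf: "lora_flow W0 0 X0 Y X" and ff: "full_flow W0 0 U" and nz: "X0 \<noteq> 0"
    and tr: "trace W0 \<noteq> 0"
  shows "((\<lambda>t. norm (Y t ** X t - U t) / norm (U t)) \<longlongrightarrow>
           sqrt (real CARD('n) * (norm (transpose X0 ** X0))\<^sup>2 - (norm X0) ^ 4) / (norm X0)\<^sup>2) at_top"
    and "real CARD('n) * (norm (transpose X0 ** X0))\<^sup>2 - (norm X0) ^ 4 \<ge> 0"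
proof -
  define a where "a = trace W0"
  define n where "n = real CARD('n)"
  define N where "N = (norm X0)\<^sup>2"
  define P where "P = transpose X0 ** X0"
  define A where "A = (norm P)\<^sup>2"
  define I where "I = (mat 1 :: real^'n^'n)"
  define L where "L = norm ((a / N) *\<^sub>R P - (a / n) *\<^sub>R I) / norm ((a / n) *\<^sub>R I)"
  have npos: "n > 0" by (simp add: n_def)
  have Npos: "N > 0" using nz by (simp add: N_def)
  have a0: "a \<noteq> 0" using tr by (simp add: a_def)
  have nI: "(norm I)\<^sup>2 = n" by (simp add: I_def n_def norm_mat1_sq)
  have iPI: "inner P I = N" by (simp add: I_def P_def N_def inner_mat1 trace_XtX)
  have den: "norm ((a / n) *\<^sub>R I) \<noteq> 0" using a0 npos nI by auto
  have lim: "((\<lambda>t. norm (Y t ** X t - U t) / norm (U t)) \<longlongrightarrow> L) at_top"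
    unfolding L_def
    by (intro tendsto_divide tendsto_norm tendsto_diff den)
       (use lora_limit[OF lf nz] full_limit[OF ff] in \<open>simp_all add: a_def N_def P_def n_def I_def\<close>)
  have num2: "(norm ((a / N) *\<^sub>R P - (a / n) *\<^sub>R I))\<^sup>2 = (a/N)\<^sup>2 * A - 2 * (a/N) * (a/n) * N + (a/n)\<^sup>2 * n"
  proof -
    have gen: "(norm (u - v))\<^sup>2 = (norm u)\<^sup>2 - 2 * inner u v + (norm v)\<^sup>2" for u v :: "real^'n^'n"
      by (simp add: power2_norm_eq_inner inner_diff_left inner_diff_right inner_commute[of v u])
    show ?thesis unfolding gen
      by (simp add: power_mult_distrib power_divide A_def nI iPI)
  qed
  have den2: "(norm ((a / n) *\<^sub>R I))\<^sup>2 = (a/n)\<^sup>2 * n"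
    using nI by (simp add: power_mult_distrib power_divide)
  have L2: "L\<^sup>2 = (n * A - N\<^sup>2) / N\<^sup>2"
    unfolding L_def power_divide num2 den2 using a0 npos Npos
    by (simp add: field_simps power2_eq_square)
  have L0: "L \<ge> 0" by (simp add: L_def)
  have nn: "n * A - N\<^sup>2 \<ge> 0"
  proof -
    have "n * A - N\<^sup>2 = L\<^sup>2 * N\<^sup>2" using L2 Npos by (simp add: field_simps)
    then show ?thesis by simp
  qed
  have "L = sqrt (L\<^sup>2)" using L0 by simp
  also have "\<dots> = sqrt (n * A - N\<^sup>2) / N" using Npos by (simp add: L2 real_sqrt_divide)
  finally have "L = sqrt (n * A - N\<^sup>2) / N" .
  moreover have "N\<^sup>2 = (norm X0) ^ 4" by (simp add: N_def power_mult[symmetric])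
  ultimately show "((\<lambda>t. norm (Y t ** X t - U t) / norm (U t)) \<longlongrightarrow>
           sqrt (real CARD('n) * (norm (transpose X0 ** X0))\<^sup>2 - (norm X0) ^ 4) / (norm X0)\<^sup>2) at_top"
    using lim by (simp add: n_def A_def P_def N_def)
  show "real CARD('n) * (norm (transpose X0 ** X0))\<^sup>2 - (norm X0) ^ 4 \<ge> 0"
    using nn \<open>N\<^sup>2 = (norm X0) ^ 4\<close> by (simp add: n_def A_def P_def)
qed




lemma inner_sum_Basis: "b \<in> Basis \<Longrightarrow> (\<Sum>b'\<in>Basis. f b' *\<^sub>R b') \<bullet> (b::'a::euclidean_space) = f b"
  by (simp add: inner_sum_left inner_Basis if_distrib sum.delta cong: if_cong)

lemma lborel_prod_Basis:
  fixes g :: "'a::euclidean_space \<Rightarrow> real \<Rightarrow> real"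
  assumes int: "\<And>b. b \<in> Basis \<Longrightarrow> integrable lborel (g b)"
  shows "integrable lborel (\<lambda>x::'a. \<Prod>b\<in>Basis. g b (x \<bullet> b))"
    and "(\<integral>x. (\<Prod>b\<in>Basis. g b (x \<bullet> b)) \<partial>(lborel::'a measure)) = (\<Prod>b\<in>Basis. integral\<^sup>L lborel (g b))"
proof -
  interpret product_sigma_finite "\<lambda>_::'a. (lborel::real measure)"
    by standard
  have L: "(lborel::'a measure) = distr (\<Pi>\<^sub>M b\<in>Basis. lborel) borel (\<lambda>f. \<Sum>b\<in>Basis. f b *\<^sub>R b)"
    by (rule lborel_eq)
  have gm[measurable]: "b \<in> Basis \<Longrightarrow> g b \<in> borel_measurable borel" for b
    using int[of b] by (simp add: borel_measurable_integrable)
  have hm: "(\<lambda>x::'a. \<Prod>b\<in>Basis. g b (x \<bullet> b)) \<in> borel_measurable borel"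
    by measurable
  have T[measurable]: "(\<lambda>f. \<Sum>b\<in>Basis. f b *\<^sub>R (b::'a)) \<in> measurable (\<Pi>\<^sub>M b\<in>Basis. lborel) borel"
    by measurable
  have eq: "(\<lambda>f. \<Prod>b\<in>Basis. g b ((\<Sum>b'\<in>Basis. f b' *\<^sub>R b') \<bullet> (b::'a))) = (\<lambda>f. \<Prod>b\<in>Basis. g b (f b))"
    by (intro ext prod.cong refl) (simp add: inner_sum_Basis)
  show "integrable lborel (\<lambda>x::'a. \<Prod>b\<in>Basis. g b (x \<bullet> b))"
    unfolding L by (subst integrable_distr_eq[OF T hm]) (simp add: eq product_integrable_prod int)
  show "(\<integral>x. (\<Prod>b\<in>Basis. g b (x \<bullet> b)) \<partial>(lborel::'a measure)) = (\<Prod>b\<in>Basis. integral\<^sup>L lborel (g b))"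
    unfolding L by (subst integral_distr[OF T hm]) (simp add: eq product_integral_prod int)
qed

definition bas :: "'r \<Rightarrow> 'n \<Rightarrow> real^'n^'r" where "bas i j = axis i (axis j 1)"

lemma Basis_mat: "(Basis :: (real^'n^'r) set) = (\<lambda>(i,j). bas i j) ` UNIV"
  by (auto simp: Basis_vec_def bas_def)

lemma inj_bas: "inj (\<lambda>(i,j). bas (i::'r::finite) (j::'n::finite))"
  by (auto simp: inj_def bas_def axis_eq_axis)

lemma inner_bas: "(X::real^'n^'r) \<bullet> bas i j = X $ i $ j"
  by (simp add: bas_def inner_axis)

lemma prod_Basis_mat: "(\<Prod>b\<in>(Basis :: (real^'n^'r) set). h b) = (\<Prod>i\<in>UNIV. \<Prod>j\<in>UNIV. h (bas i j))"
proof -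
  have "(\<Prod>b\<in>(Basis :: (real^'n^'r) set). h b) = (\<Prod>c\<in>UNIV. h ((\<lambda>(i,j). bas i j) c))"
    unfolding Basis_mat by (rule prod.reindex[OF inj_bas[THEN inj_on_subset], simplified]) 
  also have "\<dots> = (\<Prod>i\<in>UNIV. \<Prod>j\<in>UNIV. h (bas i j))"
    by (simp add: prod.cartesian_product split_def)
  finally show ?thesis .
qed

lemma lborel_prod_mat:
  fixes g :: "'r::finite \<Rightarrow> 'n::finite \<Rightarrow> real \<Rightarrow> real"
  assumes int: "\<And>i j. integrable lborel (g i j)"
  shows "integrable lborel (\<lambda>X::real^'n^'r. \<Prod>i\<in>UNIV. \<Prod>j\<in>UNIV. g i j (X $ i $ j))"
    and "(\<integral>X. (\<Prod>i\<in>UNIV. \<Prod>j\<in>UNIV. g i j (X $ i $ j)) \<partial>(lborel::(real^'n^'r) measure))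
          = (\<Prod>i\<in>UNIV. \<Prod>j\<in>UNIV. integral\<^sup>L lborel (g i j))"
proof -
  define G where "G b = g (SOME i. \<exists>j. b = bas i j) (SOME j. \<exists>i. b = bas i j)" for b :: "real^'n^'r"
  have Gb: "G (bas i j) = g i j" for i j
  proof -
    have "(SOME i'. \<exists>j'. bas i j = bas i' j') = i"
      by (rule some_equality) (use inj_bas in \<open>auto simp: inj_def\<close>)
    moreover have "(SOME j'. \<exists>i'. bas i j = bas i' j') = j"
      by (rule some_equality) (use inj_bas in \<open>auto simp: inj_def\<close>)
    ultimately show ?thesis by (simp add: G_def)
  qed
  have intG: "b \<in> Basis \<Longrightarrow> integrable lborel (G b)" for b
    using int by (auto simp: Basis_mat Gb)
  have eqf: "(\<lambda>X::real^'n^'r. \<Prod>b\<in>Basis. G b (X \<bullet> b)) = (\<lambda>X. \<Prod>i\<in>UNIV. \<Prod>j\<in>UNIV. g i j (X $ i $ j))"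
    by (simp add: prod_Basis_mat Gb inner_bas)
  show "integrable lborel (\<lambda>X::real^'n^'r. \<Prod>i\<in>UNIV. \<Prod>j\<in>UNIV. g i j (X $ i $ j))"
    using lborel_prod_Basis(1)[of G, OF intG] unfolding eqf .
  show "(\<integral>X. (\<Prod>i\<in>UNIV. \<Prod>j\<in>UNIV. g i j (X $ i $ j)) \<partial>(lborel::(real^'n^'r) measure))
          = (\<Prod>i\<in>UNIV. \<Prod>j\<in>UNIV. integral\<^sup>L lborel (g i j))"
    using lborel_prod_Basis(2)[of G, OF intG] unfolding eqf by (simp add: prod_Basis_mat Gb)
qed

definition dens :: "real \<Rightarrow> real^'n^'r \<Rightarrow> real" where
  "dens \<sigma> X = (\<Prod>i\<in>UNIV. \<Prod>j\<in>UNIV. normal_density 0 \<sigma> (X $ i $ j))"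

lemma entry_meas[measurable]: "(\<lambda>X::real^'n^'r. X $ i $ j) \<in> borel_measurable borel"
proof -
  have "(\<lambda>X::real^'n^'r. X \<bullet> bas i j) \<in> borel_measurable borel" by measurable
  then show ?thesis by (simp add: inner_bas)
qed

lemma dens_meas[measurable]: "dens \<sigma> \<in> borel_measurable borel"
  unfolding dens_def[abs_def] by measurable

lemma dens_nonneg: "dens \<sigma> X \<ge> 0"
  by (simp add: dens_def prod_nonneg)

lemma gm_def': "gauss_matrix \<sigma> = density lborel (dens \<sigma>)"
  by (simp add: gauss_matrix_def dens_def[abs_def])

lemma sets_gm[measurable_cong]: "sets (gauss_matrix \<sigma>) = sets borel"
  by (simp add: gm_def')

lemma space_gm: "space (gauss_matrix \<sigma>) = UNIV"
  by (simp add: gm_def')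

lemma gm_meas_iff: "f \<in> borel_measurable (gauss_matrix \<sigma>) \<longleftrightarrow> f \<in> borel_measurable borel"
  by (metis measurable_cong_sets sets_gm)

lemma integral_gm:
  assumes "f \<in> borel_measurable borel"
  shows "integral\<^sup>L (gauss_matrix \<sigma>) f = (\<integral>X. dens \<sigma> X * f X \<partial>lborel)"
  unfolding gm_def' using assms by (subst integral_density) (auto simp: dens_nonneg)

lemma integrable_gm:
  assumes "f \<in> borel_measurable borel"
  shows "integrable (gauss_matrix \<sigma>) f \<longleftrightarrow> integrable lborel (\<lambda>X. dens \<sigma> X * f X)"
  unfolding gm_def' using assms by (subst integrable_density) (auto simp: dens_nonneg)

lemma dens_integral:
  assumes \<sigma>: "\<sigma> > 0"
  shows "integrable lborel (dens \<sigma> :: real^'n^'r \<Rightarrow> real)"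
    and "(\<integral>X. dens \<sigma> (X::real^'n^'r) \<partial>lborel) = 1"
proof -
  note L = lborel_prod_mat[of "\<lambda>(i::'r) (j::'n). normal_density 0 \<sigma>"]
  show "integrable lborel (dens \<sigma> :: real^'n^'r \<Rightarrow> real)"
    using L(1) \<sigma> by (simp add: dens_def[abs_def])
  show "(\<integral>X. dens \<sigma> (X::real^'n^'r) \<partial>lborel) = 1"
    using L(2) \<sigma> by (simp add: dens_def[abs_def])
qed

lemma prob_gm:
  assumes "\<sigma> > 0" shows "prob_space (gauss_matrix \<sigma> :: (real^'n^'r) measure)"
proof
  have "emeasure (gauss_matrix \<sigma>) (space (gauss_matrix \<sigma> :: (real^'n^'r) measure)) = (\<integral>\<^sup>+X. ennreal (dens \<sigma> (X::real^'n^'r)) \<partial>lborel)"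
    by (simp add: gm_def' emeasure_density space_gm)
  also have "\<dots> = ennreal (\<integral>X. dens \<sigma> (X::real^'n^'r) \<partial>lborel)"
    by (rule nn_integral_eq_integral) (auto simp: dens_integral[OF \<open>\<sigma> > 0\<close>] dens_nonneg)
  also have "\<dots> = 1" by (simp add: dens_integral[OF \<open>\<sigma> > 0\<close>])
  finally show "emeasure (gauss_matrix \<sigma>) (space (gauss_matrix \<sigma> :: (real^'n^'r) measure)) = 1" .
qed

lemma nd_exp:
  assumes \<sigma>: "\<sigma> > 0" and t: "t \<ge> 0"
  defines "s \<equiv> \<sigma> / sqrt (1 + 2 * t * \<sigma>\<^sup>2)"
  shows "normal_density 0 \<sigma> y * exp (- t * y\<^sup>2) = (s / \<sigma>) * normal_density 0 s y"
proof -
  have q: "1 + 2 * t * \<sigma>\<^sup>2 > 0" using \<sigma> t by (simp add: add_pos_nonneg)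
  have sp: "s > 0" using \<sigma> q by (simp add: s_def)
  have s2: "s\<^sup>2 = \<sigma>\<^sup>2 / (1 + 2 * t * \<sigma>\<^sup>2)" using q by (simp add: s_def power_divide)
  have e: "- y\<^sup>2 / (2 * \<sigma>\<^sup>2) + - t * y\<^sup>2 = - y\<^sup>2 / (2 * s\<^sup>2)"
    using \<sigma> q by (simp add: s2 field_simps)
  have r1: "sqrt (2 * pi * \<sigma>\<^sup>2) = sqrt (2 * pi) * \<sigma>" using \<sigma> by (simp add: real_sqrt_mult)
  have r2: "sqrt (2 * pi * s\<^sup>2) = sqrt (2 * pi) * s" using sp by (simp add: real_sqrt_mult)
  have "normal_density 0 \<sigma> y * exp (- t * y\<^sup>2) = 1 / (sqrt (2 * pi) * \<sigma>) * exp (- y\<^sup>2 / (2 * s\<^sup>2))"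
  proof -
    have e2: "exp (- (y\<^sup>2 / (2 * \<sigma>\<^sup>2))) * exp (- (t * y\<^sup>2)) = exp (- (y\<^sup>2 / (2 * s\<^sup>2)))"
      by (subst exp_add[symmetric]) (use e in simp)
    show ?thesis unfolding normal_density_def r1 by (simp add: e2)
  qed
  also have "\<dots> = (s / \<sigma>) * normal_density 0 s y"
    unfolding normal_density_def r2 using sp \<sigma> by simp
  finally show ?thesis .
qed

definition mom :: "real \<Rightarrow> real \<Rightarrow> nat \<Rightarrow> real" where
  "mom \<sigma> t k = (\<integral>y. normal_density 0 \<sigma> y * exp (- t * y\<^sup>2) * y ^ k \<partial>lborel)"

lemma mom_facts:
  assumes \<sigma>: "\<sigma> > 0" and t: "t \<ge> 0"
  shows "integrable lborel (\<lambda>y. normal_density 0 \<sigma> y * exp (- t * y\<^sup>2) * y ^ k)"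
    and "mom \<sigma> t 1 = 0"
    and "mom \<sigma> t 4 * mom \<sigma> t 0 = 3 * (mom \<sigma> t 2)\<^sup>2"
    and "mom \<sigma> t 0 = 1 / sqrt (1 + 2 * t * \<sigma>\<^sup>2)"
    and "mom \<sigma> t 2 = \<sigma>\<^sup>2 / ((1 + 2 * t * \<sigma>\<^sup>2) * sqrt (1 + 2 * t * \<sigma>\<^sup>2))"
proof -
  define s where "s = \<sigma> / sqrt (1 + 2 * t * \<sigma>\<^sup>2)"
  have q: "1 + 2 * t * \<sigma>\<^sup>2 > 0" using \<sigma> t by (simp add: add_pos_nonneg)
  have sp: "s > 0" using \<sigma> q by (simp add: s_def)
  have eq: "(\<lambda>y. normal_density 0 \<sigma> y * exp (- t * y\<^sup>2) * y ^ k) = (\<lambda>y. (s / \<sigma>) * (normal_density 0 s y * (y - 0) ^ k))" for k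
  proof
    fix y
    have h: "normal_density 0 \<sigma> y * exp (- t * y\<^sup>2) = (s / \<sigma>) * normal_density 0 s y"
      by (rule nd_exp[OF \<sigma> t, folded s_def])
    show "normal_density 0 \<sigma> y * exp (- t * y\<^sup>2) * y ^ k = (s / \<sigma>) * (normal_density 0 s y * (y - 0) ^ k)"
      by (simp only: h diff_zero mult.assoc)
  qed
  show "integrable lborel (\<lambda>y. normal_density 0 \<sigma> y * exp (- t * y\<^sup>2) * y ^ k)"
    unfolding eq by (rule integrable_mult_right) (rule integrable_normal_moment[OF sp])
  have mk: "mom \<sigma> t k = (s / \<sigma>) * (\<integral>y. normal_density 0 s y * (y - 0) ^ k \<partial>lborel)" for k
    unfolding mom_def eq using sp by simp
  have m1: "(\<integral>y. normal_density 0 s y * (y - 0) ^ (2 * 0 + 1) \<partial>lborel) = 0"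
    by (rule integral_normal_moment_odd[OF sp])
  show "mom \<sigma> t 1 = 0" using m1 by (simp add: mk)
  have m0: "mom \<sigma> t 0 = s / \<sigma>" using integral_normal_density[OF sp, of 0] by (simp add: mk)
  have m2: "mom \<sigma> t 2 = (s / \<sigma>) * s\<^sup>2"
    using integral_normal_moment_even[OF sp, where k=1 and \<mu>=0] by (simp add: mk)
  have m4: "mom \<sigma> t 4 = (s / \<sigma>) * (3 * s ^ 4)"
    using integral_normal_moment_even[OF sp, where k=2 and \<mu>=0] by (simp add: mk fact_numeral power2_eq_square power4_eq_xxxx field_simps)
  show "mom \<sigma> t 4 * mom \<sigma> t 0 = 3 * (mom \<sigma> t 2)\<^sup>2"
    by (simp add: m0 m2 m4 power2_eq_square power4_eq_xxxx field_simps)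
  show "mom \<sigma> t 0 = 1 / sqrt (1 + 2 * t * \<sigma>\<^sup>2)"
    using \<sigma> by (simp add: m0 s_def)
  have sq: "(sqrt (1 + 2 * t * \<sigma>\<^sup>2))\<^sup>2 = 1 + 2 * t * \<sigma>\<^sup>2" using q by simp
  show "mom \<sigma> t 2 = \<sigma>\<^sup>2 / ((1 + 2 * t * \<sigma>\<^sup>2) * sqrt (1 + 2 * t * \<sigma>\<^sup>2))"
    using \<sigma> q by (simp add: m2 s_def power_divide sq)
qed




lemma pow_if01: "(y::real) ^ (if P then 1 else 0) = (if P then y else 1)" by simp

definition ind :: "'r \<times> 'n \<Rightarrow> 'r \<Rightarrow> 'n \<Rightarrow> nat" where
  "ind c i j = (if (i, j) = c then 1 else 0)"

lemma prod_ind: "(\<Prod>i\<in>UNIV. \<Prod>j\<in>UNIV. (X $ i $ j :: real) ^ ind c i j) = X $ fst c $ snd c"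
proof -
  obtain a b where c: "c = (a, b)" by (cases c)
  have "(\<Prod>i\<in>UNIV. \<Prod>j\<in>UNIV. (X $ i $ j :: real) ^ ind c i j)
      = (\<Prod>i\<in>UNIV. if i = a then (\<Prod>j\<in>UNIV. if j = b then X $ i $ j else 1) else 1)"
  proof (intro prod.cong refl)
    fix i
    have h: "(X $ i $ j :: real) ^ ind c i j = (if i = a then (if j = b then X $ i $ j else 1) else 1)" for j
      by (simp add: ind_def c)
    show "(\<Prod>j\<in>UNIV. (X $ i $ j :: real) ^ ind c i j) = (if i = a then (\<Prod>j\<in>UNIV. if j = b then X $ i $ j else 1) else 1)"
      by (simp add: h)
  qed
  also have "\<dots> = X $ a $ b" by simp
  finally show ?thesis by (simp add: c)
qed

definition ex4 :: "'r \<times> 'n \<Rightarrow> 'r \<times> 'n \<Rightarrow> 'r \<times> 'n \<Rightarrow> 'r \<times> 'n \<Rightarrow> 'r \<Rightarrow> 'n \<Rightarrow> nat" where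
  "ex4 c1 c2 c3 c4 i j = ind c1 i j + ind c2 i j + ind c3 i j + ind c4 i j"

lemma mono4: "X $ fst c1 $ snd c1 * X $ fst c2 $ snd c2 * X $ fst c3 $ snd c3 * X $ fst c4 $ snd c4
   = (\<Prod>i\<in>UNIV. \<Prod>j\<in>UNIV. (X $ i $ j :: real) ^ ex4 c1 c2 c3 c4 i j)"
  by (simp add: ex4_def power_add prod.distrib prod_ind)

lemma moment_prod:
  fixes e :: "'r::finite \<Rightarrow> 'n::finite \<Rightarrow> nat"
  assumes \<sigma>: "\<sigma> > 0" and t: "t \<ge> 0"
  shows "integrable lborel (\<lambda>X::real^'n^'r. dens \<sigma> X * (exp (- t * (norm X)\<^sup>2) * (\<Prod>i\<in>UNIV. \<Prod>j\<in>UNIV. (X $ i $ j) ^ e i j)))"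
    and "(\<integral>X. dens \<sigma> X * (exp (- t * (norm X)\<^sup>2) * (\<Prod>i\<in>UNIV. \<Prod>j\<in>UNIV. (X $ i $ j) ^ e i j)) \<partial>(lborel::(real^'n^'r) measure))
          = (\<Prod>i\<in>UNIV. \<Prod>j\<in>UNIV. mom \<sigma> t (e i j))"
proof -
  have eq: "(\<lambda>X::real^'n^'r. dens \<sigma> X * (exp (- t * (norm X)\<^sup>2) * (\<Prod>i\<in>UNIV. \<Prod>j\<in>UNIV. (X $ i $ j) ^ e i j)))
     = (\<lambda>X. \<Prod>i\<in>UNIV. \<Prod>j\<in>UNIV. normal_density 0 \<sigma> (X $ i $ j) * exp (- t * (X $ i $ j)\<^sup>2) * (X $ i $ j) ^ e i j)"
    by (simp add: dens_def norm_sq_mat sum_distrib_left exp_sum prod.distrib mult.assoc)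
  note L = lborel_prod_mat[of "\<lambda>i j y. normal_density 0 \<sigma> y * exp (- t * y\<^sup>2) * y ^ e i j", OF mom_facts(1)[OF \<sigma> t]]
  show "integrable lborel (\<lambda>X::real^'n^'r. dens \<sigma> X * (exp (- t * (norm X)\<^sup>2) * (\<Prod>i\<in>UNIV. \<Prod>j\<in>UNIV. (X $ i $ j) ^ e i j)))"
    unfolding eq by (rule L(1))
  show "(\<integral>X. dens \<sigma> X * (exp (- t * (norm X)\<^sup>2) * (\<Prod>i\<in>UNIV. \<Prod>j\<in>UNIV. (X $ i $ j) ^ e i j)) \<partial>(lborel::(real^'n^'r) measure))
          = (\<Prod>i\<in>UNIV. \<Prod>j\<in>UNIV. mom \<sigma> t (e i j))"
    unfolding eq L(2) by (simp add: mom_def[abs_def])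
qed




lemma prod_pairs: "(\<Prod>i\<in>UNIV. \<Prod>j\<in>UNIV. f i j) = (\<Prod>c\<in>(UNIV::('a::finite \<times> 'b::finite) set). f (fst c) (snd c))"
  by (simp add: prod.cartesian_product split_def)

lemma sum_pairs: "(\<Sum>i\<in>UNIV. \<Sum>j\<in>UNIV. f i j) = (\<Sum>c\<in>(UNIV::('a::finite \<times> 'b::finite) set). f (fst c) (snd c))"
  by (simp add: sum.cartesian_product split_def)

lemma prod_support:
  fixes E :: "'a::finite \<Rightarrow> nat"
  assumes "\<And>c. c \<notin> S \<Longrightarrow> E c = 0"
  shows "(\<Prod>c\<in>UNIV. mom \<sigma> t (E c)) = (\<Prod>c\<in>S. mom \<sigma> t (E c)) * mom \<sigma> t 0 ^ (CARD('a) - card S)"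
proof -
  have "(\<Prod>c\<in>UNIV. mom \<sigma> t (E c)) = (\<Prod>c\<in>UNIV - S. mom \<sigma> t (E c)) * (\<Prod>c\<in>S. mom \<sigma> t (E c))"
    by (rule prod.subset_diff) auto
  also have "(\<Prod>c\<in>UNIV - S. mom \<sigma> t (E c)) = (\<Prod>c\<in>UNIV - S. mom \<sigma> t 0)"
    by (intro prod.cong refl) (simp add: assms)
  also have "\<dots> = mom \<sigma> t 0 ^ (CARD('a) - card S)"
    by (simp add: card_Diff_subset)
  finally show ?thesis by simp
qed

definition EV :: "real \<Rightarrow> real \<Rightarrow> 'r::finite \<times> 'n::finite \<Rightarrow> 'r \<times> 'n \<Rightarrow> 'r \<times> 'n \<Rightarrow> 'r \<times> 'n \<Rightarrow> real" where
  "EV \<sigma> t c1 c2 c3 c4 = (\<Prod>i\<in>UNIV. \<Prod>j\<in>UNIV. mom \<sigma> t (ex4 c1 c2 c3 c4 i j))"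

definition a22 :: "real \<Rightarrow> real \<Rightarrow> 'r::finite itself \<Rightarrow> 'n::finite itself \<Rightarrow> real" where
  "a22 \<sigma> t _ _ = (mom \<sigma> t 2)\<^sup>2 * mom \<sigma> t 0 ^ (CARD('r \<times> 'n) - 2)"

lemma EV_pairs: "EV \<sigma> t c1 c2 c3 c4 = (\<Prod>c\<in>UNIV. mom \<sigma> t (ex4 c1 c2 c3 c4 (fst c) (snd c)))"
  by (simp add: EV_def prod_pairs)

lemma mom_Suc: "mom \<sigma> t (Suc 0) = mom \<sigma> t 1" "mom \<sigma> t (Suc (Suc 0)) = mom \<sigma> t 2"
  "mom \<sigma> t (Suc (Suc (Suc (Suc 0)))) = mom \<sigma> t 4"
  by (simp_all add: eval_nat_numeral)

lemma ex4_ind: "ind c i j = (if (i, j) = c then 1 else 0)" by (simp add: ind_def)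

lemma EV_V1:
  assumes "\<sigma> > 0" "t \<ge> 0" "CARD('r::finite) * CARD('n::finite) \<ge> 2"
  shows "EV \<sigma> t (c::'r \<times> 'n) c c c = 3 * a22 \<sigma> t TYPE('r) TYPE('n)"
proof -
  have "EV \<sigma> t c c c c = (\<Prod>d\<in>{c}. mom \<sigma> t (ex4 c c c c (fst d) (snd d))) * mom \<sigma> t 0 ^ (CARD('r \<times> 'n) - card {c})"
    unfolding EV_pairs by (rule prod_support) (auto simp: ex4_def ind_def)
  also have "\<dots> = mom \<sigma> t 4 * mom \<sigma> t 0 ^ (CARD('r \<times> 'n) - 1)"
    by (simp add: ex4_def ind_def mom_Suc)
  also have "\<dots> = mom \<sigma> t 4 * mom \<sigma> t 0 * mom \<sigma> t 0 ^ (CARD('r \<times> 'n) - 2)"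
  proof -
    have "CARD('r \<times> 'n) - 1 = Suc (CARD('r \<times> 'n) - 2)" using assms(3) by simp
    then show ?thesis by simp
  qed
  also have "\<dots> = 3 * a22 \<sigma> t TYPE('r) TYPE('n)"
    by (simp add: a22_def mom_facts(3)[OF assms(1,2)])
  finally show ?thesis .
qed

lemma EV_V2:
  assumes "(c::'r::finite \<times> 'n::finite) \<noteq> d"
  shows "EV \<sigma> t c c d d = a22 \<sigma> t TYPE('r) TYPE('n)" and "EV \<sigma> t c d c d = a22 \<sigma> t TYPE('r) TYPE('n)"
proof -
  have "EV \<sigma> t c c d d = (\<Prod>e\<in>{c,d}. mom \<sigma> t (ex4 c c d d (fst e) (snd e))) * mom \<sigma> t 0 ^ (CARD('r \<times> 'n) - card {c,d})"
    unfolding EV_pairs by (rule prod_support) (auto simp: ex4_def ind_def)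
  also have "\<dots> = a22 \<sigma> t TYPE('r) TYPE('n)"
  proof -
    have e: "CARD('r)*CARD('n) - Suc (Suc 0) = CARD('r)*CARD('n) - 2" by simp
    show ?thesis using assms by (simp add: ex4_def ind_def a22_def power2_eq_square mom_Suc e)
  qed
  finally show "EV \<sigma> t c c d d = a22 \<sigma> t TYPE('r) TYPE('n)" .
  moreover have "EV \<sigma> t c d c d = EV \<sigma> t c c d d"
    unfolding EV_def ex4_def by (simp add: ac_simps)
  ultimately show "EV \<sigma> t c d c d = a22 \<sigma> t TYPE('r) TYPE('n)" by simp
qed

lemma EV_V0:
  assumes "\<sigma> > 0" "t \<ge> 0" "c1 \<noteq> c2" "c1 \<noteq> c3" "c1 \<noteq> c4"
  shows "EV \<sigma> t (c1::'r::finite \<times> 'n::finite) c2 c3 c4 = 0"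
proof -
  have "ind c1 (fst c1) (snd c1) = 1" by (simp add: ind_def)
  moreover have "ind c2 (fst c1) (snd c1) = 0" using assms(3) by (simp add: ind_def)
  moreover have "ind c3 (fst c1) (snd c1) = 0" using assms(4) by (simp add: ind_def)
  moreover have "ind c4 (fst c1) (snd c1) = 0" using assms(5) by (simp add: ind_def)
  ultimately have "ex4 c1 c2 c3 c4 (fst c1) (snd c1) = 1" by (simp add: ex4_def)
  then have "mom \<sigma> t (ex4 c1 c2 c3 c4 (fst c1) (snd c1)) = 0"
    using mom_facts(2)[OF assms(1,2)] by simp
  then show ?thesis unfolding EV_pairs by (intro prod_zero) auto
qed




definition Et :: "real \<Rightarrow> real \<Rightarrow> (real^'n^'r \<Rightarrow> real) \<Rightarrow> real" where
  "Et \<sigma> t f = (\<integral>X. dens \<sigma> X * (exp (- t * (norm X)\<^sup>2) * f X) \<partial>lborel)"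

lemma mono_int:
  assumes \<sigma>: "\<sigma> > 0" and t: "t \<ge> 0"
  shows "integrable lborel (\<lambda>X::real^'n::finite^'r::finite. dens \<sigma> X * (exp (- t * (norm X)\<^sup>2) * (X $ i1 $ j1 * X $ i2 $ j2 * X $ i3 $ j3 * X $ i4 $ j4)))"
    and "Et \<sigma> t (\<lambda>X::real^'n::finite^'r::finite. X $ i1 $ j1 * X $ i2 $ j2 * X $ i3 $ j3 * X $ i4 $ j4) = EV \<sigma> t (i1,j1) (i2,j2) (i3,j3) (i4,j4)"
proof -
  have eq: "X $ i1 $ j1 * X $ i2 $ j2 * X $ i3 $ j3 * X $ i4 $ j4
     = (\<Prod>i\<in>UNIV. \<Prod>j\<in>UNIV. (X $ i $ j :: real) ^ ex4 (i1,j1) (i2,j2) (i3,j3) (i4,j4) i j)" for X :: "real^'n^'r"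
    using mono4[of X "(i1,j1)" "(i2,j2)" "(i3,j3)" "(i4,j4)"] by simp
  show "integrable lborel (\<lambda>X::real^'n::finite^'r::finite. dens \<sigma> X * (exp (- t * (norm X)\<^sup>2) * (X $ i1 $ j1 * X $ i2 $ j2 * X $ i3 $ j3 * X $ i4 $ j4)))"
    unfolding eq by (rule moment_prod(1)[OF \<sigma> t])
  show "Et \<sigma> t (\<lambda>X::real^'n::finite^'r::finite. X $ i1 $ j1 * X $ i2 $ j2 * X $ i3 $ j3 * X $ i4 $ j4) = EV \<sigma> t (i1,j1) (i2,j2) (i3,j3) (i4,j4)"
    unfolding Et_def eq moment_prod(2)[OF \<sigma> t] EV_def ..
qed

definition Af :: "real^'n^'r \<Rightarrow> real" where "Af X = (norm (transpose X ** X))\<^sup>2"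
definition Bf :: "real^'n^'r \<Rightarrow> real" where "Bf X = (norm X) ^ 4"

lemma Af_exp: "Af X = (\<Sum>j\<in>UNIV. \<Sum>l\<in>UNIV. \<Sum>i\<in>UNIV. \<Sum>k\<in>UNIV. X $ i $ j * X $ i $ l * X $ k $ j * X $ k $ l)"
  unfolding Af_def norm_sq_mat
  by (simp add: mm_entry tr_entry power2_eq_square sum_product mult.assoc)

lemma Bf_exp: "Bf X = (\<Sum>i\<in>UNIV. \<Sum>j\<in>UNIV. \<Sum>k\<in>UNIV. \<Sum>l\<in>UNIV. X $ k $ l * X $ k $ l * X $ i $ j * X $ i $ j)"
proof -
  have "Bf X = ((norm X)\<^sup>2)\<^sup>2" by (simp add: Bf_def power_mult[symmetric])
  also have "\<dots> = (\<Sum>i\<in>UNIV. \<Sum>j\<in>UNIV. \<Sum>k\<in>UNIV. \<Sum>l\<in>UNIV. X $ k $ l * X $ k $ l * X $ i $ j * X $ i $ j)"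
    unfolding norm_sq_mat by (simp add: power2_eq_square sum_product sum_distrib_left sum_distrib_right mult.assoc)
  finally show ?thesis .
qed

lemma sum_if_eq: "(\<Sum>k\<in>(UNIV::'a::finite set). if i = k then \<alpha> else \<beta>) = \<alpha> + (real CARD('a) - 1) * (\<beta>::real)"
proof -
  have "(\<Sum>k\<in>(UNIV::'a set). if i = k then \<alpha> else \<beta>) = (\<Sum>k\<in>(UNIV::'a set). \<beta> + (if k = i then \<alpha> - \<beta> else 0))"
    by (intro sum.cong) auto
  also have "\<dots> = real CARD('a) * \<beta> + (\<alpha> - \<beta>)" by (simp add: sum.distrib)
  finally show ?thesis by (simp add: algebra_simps)
qed

lemma EtA:
  assumes \<sigma>: "\<sigma> > 0" and t: "t \<ge> 0" and m2: "CARD('r::finite) * CARD('n::finite) \<ge> 2"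
  shows "integrable lborel (\<lambda>X::real^'n^'r. dens \<sigma> X * (exp (- t * (norm X)\<^sup>2) * Af X))"
    and "Et \<sigma> t (Af :: real^'n^'r \<Rightarrow> real) = real CARD('r) * real CARD('n) * (real CARD('n) + real CARD('r) + 1) * a22 \<sigma> t TYPE('r) TYPE('n)"
proof -
  define a where "a = a22 \<sigma> t TYPE('r) TYPE('n)"
  define r where "r = real CARD('r)"
  define n where "n = real CARD('n)"
  note it = mono_int(1)[OF \<sigma> t]
  have eqf: "(\<lambda>X::real^'n^'r. dens \<sigma> X * (exp (- t * (norm X)\<^sup>2) * Af X)) =
     (\<lambda>X. \<Sum>j\<in>UNIV. \<Sum>l\<in>UNIV. \<Sum>i\<in>UNIV. \<Sum>k\<in>UNIV. dens \<sigma> X * (exp (- t * (norm X)\<^sup>2) * (X $ i $ j * X $ i $ l * X $ k $ j * X $ k $ l)))"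
    by (simp add: Af_exp sum_distrib_left)
  show "integrable lborel (\<lambda>X::real^'n^'r. dens \<sigma> X * (exp (- t * (norm X)\<^sup>2) * Af X))"
    unfolding eqf by (intro Bochner_Integration.integrable_sum it)
  have "Et \<sigma> t (Af :: real^'n^'r \<Rightarrow> real) = (\<Sum>j\<in>UNIV. \<Sum>l\<in>UNIV. \<Sum>i\<in>UNIV. \<Sum>k\<in>UNIV.
      Et \<sigma> t (\<lambda>X::real^'n^'r. X $ i $ j * X $ i $ l * X $ k $ j * X $ k $ l))"
    unfolding Et_def eqf by (simp only: Bochner_Integration.integral_sum Bochner_Integration.integrable_sum it)
  also have "\<dots> = (\<Sum>j\<in>(UNIV::'n set). \<Sum>l\<in>(UNIV::'n set). \<Sum>i\<in>(UNIV::'r set). \<Sum>k\<in>(UNIV::'r set).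
      (if i = k then (if j = l then 3 * a else a) else (if j = l then a else 0)))"
  proof (intro sum.cong refl)
    fix j l :: 'n and i k :: 'r
    show "Et \<sigma> t (\<lambda>X::real^'n^'r. X $ i $ j * X $ i $ l * X $ k $ j * X $ k $ l) =
      (if i = k then (if j = l then 3 * a else a) else (if j = l then a else 0))"
      unfolding mono_int(2)[OF \<sigma> t] a_def
      by (cases "i = k"; cases "j = l") (simp_all add: EV_V1[OF \<sigma> t m2] EV_V2 EV_V0[OF \<sigma> t])
  qed
  also have "\<dots> = (\<Sum>j\<in>(UNIV::'n set). \<Sum>l\<in>(UNIV::'n set). if j = l then r * (3 * a + (r - 1) * a) else r * a)"
    by (intro sum.cong refl) (auto simp: sum_if_eq r_def)
  also have "\<dots> = n * (r * (3 * a + (r - 1) * a) + (n - 1) * (r * a))"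
    by (simp add: sum_if_eq n_def)
  also have "\<dots> = r * n * (n + r + 1) * a" by (simp add: algebra_simps)
  finally show "Et \<sigma> t (Af :: real^'n^'r \<Rightarrow> real) = real CARD('r) * real CARD('n) * (real CARD('n) + real CARD('r) + 1) * a22 \<sigma> t TYPE('r) TYPE('n)"
    by (simp add: r_def n_def a_def)
qed

lemma EtB:
  assumes \<sigma>: "\<sigma> > 0" and t: "t \<ge> 0" and m2: "CARD('r::finite) * CARD('n::finite) \<ge> 2"
  shows "integrable lborel (\<lambda>X::real^'n^'r. dens \<sigma> X * (exp (- t * (norm X)\<^sup>2) * Bf X))"
    and "Et \<sigma> t (Bf :: real^'n^'r \<Rightarrow> real) = real CARD('r) * real CARD('n) * (real CARD('r) * real CARD('n) + 2) * a22 \<sigma> t TYPE('r) TYPE('n)"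
proof -
  define a where "a = a22 \<sigma> t TYPE('r) TYPE('n)"
  define m where "m = real CARD('r \<times> 'n)"
  note it = mono_int(1)[OF \<sigma> t]
  have eqf: "(\<lambda>X::real^'n^'r. dens \<sigma> X * (exp (- t * (norm X)\<^sup>2) * Bf X)) =
     (\<lambda>X. \<Sum>i\<in>UNIV. \<Sum>j\<in>UNIV. \<Sum>k\<in>UNIV. \<Sum>l\<in>UNIV. dens \<sigma> X * (exp (- t * (norm X)\<^sup>2) * (X $ k $ l * X $ k $ l * X $ i $ j * X $ i $ j)))"
    by (simp add: Bf_exp sum_distrib_left)
  show "integrable lborel (\<lambda>X::real^'n^'r. dens \<sigma> X * (exp (- t * (norm X)\<^sup>2) * Bf X))"
    unfolding eqf by (intro Bochner_Integration.integrable_sum it)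
  have "Et \<sigma> t (Bf :: real^'n^'r \<Rightarrow> real) = (\<Sum>i\<in>UNIV. \<Sum>j\<in>UNIV. \<Sum>k\<in>UNIV. \<Sum>l\<in>UNIV.
      Et \<sigma> t (\<lambda>X::real^'n^'r. X $ k $ l * X $ k $ l * X $ i $ j * X $ i $ j))"
    unfolding Et_def eqf by (simp only: Bochner_Integration.integral_sum Bochner_Integration.integrable_sum it)
  also have "\<dots> = (\<Sum>i\<in>(UNIV::'r set). \<Sum>j\<in>(UNIV::'n set). \<Sum>k\<in>(UNIV::'r set). \<Sum>l\<in>(UNIV::'n set).
      (if (i, j) = (k, l) then 3 * a else a))"
  proof (intro sum.cong refl)
    fix j l :: 'n and i k :: 'r
    show "Et \<sigma> t (\<lambda>X::real^'n^'r. X $ k $ l * X $ k $ l * X $ i $ j * X $ i $ j) =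
      (if (i, j) = (k, l) then 3 * a else a)"
      unfolding mono_int(2)[OF \<sigma> t] a_def
      by (cases "(i, j) = (k, l)") (auto simp: EV_V1[OF \<sigma> t m2] EV_V2)
  qed
  also have "\<dots> = (\<Sum>i\<in>(UNIV::'r set). \<Sum>j\<in>(UNIV::'n set). \<Sum>k\<in>(UNIV::'r set).
      (if i = k then 3 * a + (real CARD('n) - 1) * a else real CARD('n) * a))"
  proof (intro sum.cong refl)
    fix i k :: 'r and j :: 'n
    show "(\<Sum>l\<in>UNIV. if (i, j) = (k, l) then 3 * a else a) = (if i = k then 3 * a + (real CARD('n) - 1) * a else real CARD('n) * a)"
      by (cases "i = k") (simp_all add: sum_if_eq)
  qed
  also have "\<dots> = real CARD('r) * real CARD('n) * ((3 * a + (real CARD('n) - 1) * a) + (real CARD('r) - 1) * (real CARD('n) * a))"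
    by (simp add: sum_if_eq)
  also have "\<dots> = real CARD('r) * real CARD('n) * (real CARD('r) * real CARD('n) + 2) * a" by (simp add: algebra_simps)
  finally show "Et \<sigma> t (Bf :: real^'n^'r \<Rightarrow> real) = real CARD('r) * real CARD('n) * (real CARD('r) * real CARD('n) + 2) * a22 \<sigma> t TYPE('r) TYPE('n)"
    by (simp add: a_def)
qed




lemma kernel:
  assumes x: "x > 0"
  shows "(\<integral>\<^sup>+t. ennreal (t * exp (- t * x)) * indicator {0..} t \<partial>lborel) = ennreal (1 / x\<^sup>2)"
proof -
  have "(\<integral>\<^sup>+t. ennreal (erlang_density 0 x t * t ^ 1) \<partial>lborel) = fact (0 + 1) / (fact 0 * x ^ 1)"
    by (rule nn_integral_erlang_ith_moment[OF x])
  also have "\<dots> = ennreal (1 / x)" by simp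
  finally have h: "(\<integral>\<^sup>+t. ennreal (erlang_density 0 x t * t ^ 1) \<partial>lborel) = ennreal (1 / x)" .
  have "(\<integral>\<^sup>+t. ennreal (erlang_density 0 x t * t ^ 1) \<partial>lborel)
      = (\<integral>\<^sup>+t. ennreal x * (ennreal (t * exp (- t * x)) * indicator {0..} t) \<partial>lborel)"
    using x by (intro nn_integral_cong) (auto simp: erlang_density_def ennreal_mult[symmetric] indicator_def mult_ac)
  also have "\<dots> = ennreal x * (\<integral>\<^sup>+t. ennreal (t * exp (- t * x)) * indicator {0..} t \<partial>lborel)"
    by (rule nn_integral_cmult) auto
  finally have "ennreal x * (\<integral>\<^sup>+t. ennreal (t * exp (- t * x)) * indicator {0..} t \<partial>lborel) = ennreal (1 / x)"
    using h by simp
  then have "(\<integral>\<^sup>+t. ennreal (t * exp (- t * x)) * indicator {0..} t \<partial>lborel) = ennreal (1 / x) / ennreal x"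
    using x by (metis ennreal_eq_0_iff ennreal_neq_top mult.commute not_le ennreal_mult_divide_eq)
  also have "\<dots> = ennreal (1 / x\<^sup>2)"
    using x by (simp add: divide_ennreal power2_eq_square)
  finally show ?thesis .
qed

lemma meas_gm_borel[measurable_dest]: "f \<in> borel_measurable borel \<Longrightarrow> f \<in> borel_measurable (gauss_matrix \<sigma>)"
  by (simp add: gm_meas_iff)

lemma AE_gm_nz: "AE X in gauss_matrix \<sigma>. X \<noteq> 0"
proof -
  have "AE X in lborel. X \<noteq> (0::real^'n^'r)" by (rule AE_lborel_singleton)
  then show ?thesis unfolding gm_def' by (subst AE_density) (auto elim: AE_mp)
qed

lemma tonelli_main:
  fixes f :: "real^'n::finite^'r::finite \<Rightarrow> real"
  assumes \<sigma>: "\<sigma> > 0" and fm[measurable]: "f \<in> borel_measurable borel" and f0: "\<And>X. f X \<ge> 0"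
    and fi: "\<And>t. t \<ge> 0 \<Longrightarrow> integrable lborel (\<lambda>X. dens \<sigma> X * (exp (- t * (norm X)\<^sup>2) * f X))"
  shows "(\<integral>\<^sup>+X. ennreal (f X / Bf X) \<partial>gauss_matrix \<sigma>) = (\<integral>\<^sup>+t. ennreal (t * Et \<sigma> t f) * indicator {0..} t \<partial>lborel)"
proof -
  interpret G: prob_space "gauss_matrix \<sigma> :: (real^'n^'r) measure" by (rule prob_gm[OF \<sigma>])
  interpret P: pair_sigma_finite "gauss_matrix \<sigma> :: (real^'n^'r) measure" "lborel :: real measure"
    by (intro pair_sigma_finite.intro G.sigma_finite_measure_axioms sigma_finite_lborel)
  define F where "F X t = ennreal (f X * (t * exp (- t * (norm X)\<^sup>2))) * indicator {0..} t" for X :: "real^'n^'r" and t :: real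
  have "(\<integral>\<^sup>+X. ennreal (f X / Bf X) \<partial>gauss_matrix \<sigma>) = (\<integral>\<^sup>+X. (\<integral>\<^sup>+t. F X t \<partial>lborel) \<partial>gauss_matrix \<sigma>)"
  proof (rule nn_integral_cong_AE)
    show "AE X in gauss_matrix \<sigma>. ennreal (f X / Bf X) = (\<integral>\<^sup>+t. F X t \<partial>lborel)"
      using AE_gm_nz
    proof (rule AE_mp, intro AE_I2 impI)
      fix X :: "real^'n^'r" assume "X \<noteq> 0"
      then have Np: "(norm X)\<^sup>2 > 0" by simp
      have "(\<integral>\<^sup>+t. F X t \<partial>lborel) = (\<integral>\<^sup>+t. ennreal (f X) * (ennreal (t * exp (- t * (norm X)\<^sup>2)) * indicator {0..} t) \<partial>lborel)"
        unfolding F_def using f0[of X]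
        by (intro nn_integral_cong) (auto simp: indicator_def ennreal_mult[symmetric] mult_ac)
      also have "\<dots> = ennreal (f X) * (\<integral>\<^sup>+t. ennreal (t * exp (- t * (norm X)\<^sup>2)) * indicator {0..} t \<partial>lborel)"
        by (rule nn_integral_cmult) auto
      also have "\<dots> = ennreal (f X) * ennreal (1 / ((norm X)\<^sup>2)\<^sup>2)"
        by (simp only: kernel[OF Np])
      also have "\<dots> = ennreal (f X / Bf X)"
        using f0[of X] by (simp add: ennreal_mult[symmetric] Bf_def power_mult[symmetric] divide_inverse)
      finally show "ennreal (f X / Bf X) = (\<integral>\<^sup>+t. F X t \<partial>lborel)" ..
    qed
  qed
  also have "\<dots> = (\<integral>\<^sup>+t. (\<integral>\<^sup>+X. F X t \<partial>gauss_matrix \<sigma>) \<partial>lborel)"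
  proof (rule P.Fubini'[symmetric])
    have [measurable]: "(\<lambda>X::real^'n^'r. (norm X)\<^sup>2) \<in> borel_measurable borel" by measurable
    show "case_prod F \<in> borel_measurable (gauss_matrix \<sigma> \<Otimes>\<^sub>M lborel)"
      unfolding F_def[abs_def] by measurable
  qed
  also have "\<dots> = (\<integral>\<^sup>+t. ennreal (t * Et \<sigma> t f) * indicator {0..} t \<partial>lborel)"
  proof (rule nn_integral_cong)
    fix t :: real
    show "(\<integral>\<^sup>+X. F X t \<partial>gauss_matrix \<sigma>) = ennreal (t * Et \<sigma> t f) * indicator {0..} t"
    proof (cases "t \<ge> 0")
      case True
      have gm: "(\<lambda>X::real^'n^'r. f X * (t * exp (- t * (norm X)\<^sup>2))) \<in> borel_measurable borel" by measurable
      have int: "integrable (gauss_matrix \<sigma>) (\<lambda>X. f X * (t * exp (- t * (norm X)\<^sup>2)))"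
        unfolding integrable_gm[OF gm]
        using integrable_mult_right[OF fi[OF True], of t] by (simp add: mult_ac)
      have "(\<integral>\<^sup>+X. F X t \<partial>gauss_matrix \<sigma>) = (\<integral>\<^sup>+X. ennreal (f X * (t * exp (- t * (norm X)\<^sup>2))) \<partial>gauss_matrix \<sigma>)"
        using True by (simp add: F_def)
      also have "\<dots> = ennreal (integral\<^sup>L (gauss_matrix \<sigma>) (\<lambda>X. f X * (t * exp (- t * (norm X)\<^sup>2))))"
        by (rule nn_integral_eq_integral[OF int]) (use f0 True in simp)
      also have "integral\<^sup>L (gauss_matrix \<sigma>) (\<lambda>X. f X * (t * exp (- t * (norm X)\<^sup>2))) = t * Et \<sigma> t f"
        unfolding integral_gm[OF gm] Et_def by (simp add: mult_ac)
      finally show ?thesis using True by simp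
    next
      case False
      then show ?thesis by (simp add: F_def)
    qed
  qed
  finally show ?thesis .
qed




lemma Af_meas[measurable]: "(Af :: real^'n::finite^'r::finite \<Rightarrow> real) \<in> borel_measurable borel"
proof -
  have "Af = (\<lambda>X::real^'n^'r. \<Sum>j\<in>UNIV. \<Sum>l\<in>UNIV. \<Sum>i\<in>UNIV. \<Sum>k\<in>UNIV. X $ i $ j * X $ i $ l * X $ k $ j * X $ k $ l)"
    by (rule ext) (rule Af_exp)
  also have "\<dots> \<in> borel_measurable borel" by measurable
  finally show ?thesis .
qed

lemma Bf_meas[measurable]: "(Bf :: real^'n::finite^'r::finite \<Rightarrow> real) \<in> borel_measurable borel"
  unfolding Bf_def[abs_def] by measurable

lemma Af_nonneg: "Af X \<ge> 0" by (simp add: Af_def)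
lemma Bf_nonneg: "Bf X \<ge> 0" by (simp add: Bf_def)

lemma E_ratio:
  assumes \<sigma>: "\<sigma> > 0" and m2: "CARD('r::finite) * CARD('n::finite) \<ge> 2"
  defines "\<kappa> \<equiv> (real CARD('n) + real CARD('r) + 1) / (real CARD('r) * real CARD('n) + 2)"
  shows "integrable (gauss_matrix \<sigma>) (\<lambda>X::real^'n^'r. Af X / Bf X)"
    and "integral\<^sup>L (gauss_matrix \<sigma>) (\<lambda>X::real^'n^'r. Af X / Bf X) = \<kappa>"
proof -
  interpret G: prob_space "gauss_matrix \<sigma> :: (real^'n^'r) measure" by (rule prob_gm[OF \<sigma>])
  have k0: "\<kappa> \<ge> 0" by (simp add: \<kappa>_def)
  have EAB: "Et \<sigma> t (Af :: real^'n^'r \<Rightarrow> real) = \<kappa> * Et \<sigma> t (Bf :: real^'n^'r \<Rightarrow> real)" if "t \<ge> 0" for t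
  proof -
    have d: "real CARD('r) * real CARD('n) + 2 \<noteq> 0"
      by (metis add_pos_nonneg mult_nonneg_nonneg of_nat_0_le_iff zero_less_numeral order_less_irrefl add.commute)
    show ?thesis unfolding EtA(2)[OF \<sigma> that m2] EtB(2)[OF \<sigma> that m2] \<kappa>_def
      using d by (simp add: divide_simps)
  qed
  have tA: "(\<integral>\<^sup>+X. ennreal (Af X / Bf (X::real^'n^'r)) \<partial>gauss_matrix \<sigma>) = (\<integral>\<^sup>+t. ennreal (t * Et \<sigma> t (Af :: real^'n^'r \<Rightarrow> real)) * indicator {0..} t \<partial>lborel)"
    by (rule tonelli_main[OF \<sigma> Af_meas Af_nonneg EtA(1)[OF \<sigma> _ m2]])
  have tB: "(\<integral>\<^sup>+X. ennreal (Bf X / Bf (X::real^'n^'r)) \<partial>gauss_matrix \<sigma>) = (\<integral>\<^sup>+t. ennreal (t * Et \<sigma> t (Bf :: real^'n^'r \<Rightarrow> real)) * indicator {0..} t \<partial>lborel)"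
    by (rule tonelli_main[OF \<sigma> Bf_meas Bf_nonneg EtB(1)[OF \<sigma> _ m2]])
  have B1: "(\<integral>\<^sup>+X. ennreal (Bf X / Bf (X::real^'n^'r)) \<partial>gauss_matrix \<sigma>) = (\<integral>\<^sup>+X. 1 \<partial>(gauss_matrix \<sigma> :: (real^'n^'r) measure))"
  proof (rule nn_integral_cong_AE)
    show "AE X in gauss_matrix \<sigma>. ennreal (Bf X / Bf X) = 1"
      using AE_gm_nz by (rule AE_mp) (auto simp: Bf_def)
  qed
  also have "\<dots> = 1" by (simp add: G.emeasure_space_1)
  finally have B1': "(\<integral>\<^sup>+X. ennreal (Bf X / Bf (X::real^'n^'r)) \<partial>gauss_matrix \<sigma>) = 1" .
  define h where "h t = real CARD('r) * real CARD('n) * (real CARD('r) * real CARD('n) + 2) *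
     ((\<sigma>\<^sup>2 / ((1 + 2 * t * \<sigma>\<^sup>2) * sqrt (1 + 2 * t * \<sigma>\<^sup>2)))\<^sup>2 * (1 / sqrt (1 + 2 * t * \<sigma>\<^sup>2)) ^ (CARD('r \<times> 'n) - 2))" for t
  have hm[measurable]: "h \<in> borel_measurable borel" unfolding h_def[abs_def] by measurable
  have EBh: "Et \<sigma> t (Bf :: real^'n^'r \<Rightarrow> real) = h t" if "t \<ge> 0" for t
    unfolding EtB(2)[OF \<sigma> that m2] h_def a22_def mom_facts(4,5)[OF \<sigma> that] ..
  have iB: "(\<integral>\<^sup>+t. ennreal (t * Et \<sigma> t (Bf :: real^'n^'r \<Rightarrow> real)) * indicator {0..} t \<partial>lborel)
      = (\<integral>\<^sup>+t. ennreal (t * h t) * indicator {0..} t \<partial>lborel)"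
    by (intro nn_integral_cong) (auto simp: EBh indicator_def)
  have "(\<integral>\<^sup>+X. ennreal (Af X / Bf (X::real^'n^'r)) \<partial>gauss_matrix \<sigma>) = (\<integral>\<^sup>+t. ennreal \<kappa> * (ennreal (t * h t) * indicator {0..} t) \<partial>lborel)"
    unfolding tA
  proof (rule nn_integral_cong)
    fix t :: real
    show "ennreal (t * Et \<sigma> t (Af :: real^'n^'r \<Rightarrow> real)) * indicator {0..} t = ennreal \<kappa> * (ennreal (t * h t) * indicator {0..} t)"
      by (cases "t \<ge> 0") (simp_all add: EAB EBh ennreal_mult'[symmetric] k0 mult_ac)
  qed
  also have "\<dots> = ennreal \<kappa> * (\<integral>\<^sup>+t. ennreal (t * h t) * indicator {0..} t \<partial>lborel)"
    by (rule nn_integral_cmult) auto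
  also have "\<dots> = ennreal \<kappa>" using B1' tB iB by simp
  finally have nnA: "(\<integral>\<^sup>+X. ennreal (Af X / Bf (X::real^'n^'r)) \<partial>gauss_matrix \<sigma>) = ennreal \<kappa>" .
  have mAB: "(\<lambda>X::real^'n^'r. Af X / Bf X) \<in> borel_measurable (gauss_matrix \<sigma>)" by measurable
  show "integrable (gauss_matrix \<sigma>) (\<lambda>X::real^'n^'r. Af X / Bf X)"
    by (rule integrableI_nonneg[OF mAB]) (auto simp: nnA Af_nonneg Bf_nonneg)
  show "integral\<^sup>L (gauss_matrix \<sigma>) (\<lambda>X::real^'n^'r. Af X / Bf X) = \<kappa>"
    by (subst integral_eq_nn_integral[OF mAB]) (auto simp: nnA Af_nonneg Bf_nonneg k0)
qed




theorem theorem2p8: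
  fixes W0 :: "real^'n^'n"
    and Yf :: "real^'n^'r \<Rightarrow> real \<Rightarrow> real^'r^'n"
    and Xf :: "real^'n^'r \<Rightarrow> real \<Rightarrow> real^'n^'r"
    and Uf :: "real^'n^'r \<Rightarrow> real \<Rightarrow> real^'n^'n"
    and \<sigma> :: real
  assumes r_lt_n: "CARD('r) < CARD('n)"
    and trW0: "trace W0 \<noteq> 0"
  shows
    "(\<forall>X0 :: real^'n^'r. norm X0 \<noteq> 0 \<longrightarrow> lora_gd_bounded W0 (0::real^'r^'n) X0 \<longrightarrow>
        full_flow W0 ((0::real^'r^'n) ** X0) (Uf X0) \<longrightarrow> lora_flow W0 0 X0 (Yf X0) (Xf X0) \<longrightarrow>
        ((\<lambda>t. norm (Yf X0 t ** Xf X0 t - Uf X0 t) / norm (Uf X0 t)) \<longlongrightarrow>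
           sqrt (real CARD('n) * (norm (transpose X0 ** X0))\<^sup>2 - (norm X0) ^ 4) / (norm X0)\<^sup>2) at_top)
     \<and>
     ((\<sigma> > 0 \<and>
       (\<forall>X0 :: real^'n^'r. norm X0 \<noteq> 0 \<longrightarrow> lora_gd_bounded W0 (0::real^'r^'n) X0 \<and>
          full_flow W0 ((0::real^'r^'n) ** X0) (Uf X0) \<and> lora_flow W0 0 X0 (Yf X0) (Xf X0)))
      \<longrightarrow>
       integral\<^sup>L (gauss_matrix \<sigma>)
          (\<lambda>X0. Lim at_top (\<lambda>t. (norm (Yf X0 t ** Xf X0 t - Uf X0 t))\<^sup>2 / (norm (Uf X0 t))\<^sup>2))
         = (real CARD('n) ^ 2 + real CARD('n) - 2) / (real CARD('n) * real CARD('r) + 2)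
       \<and> integrable (gauss_matrix \<sigma>)
          (\<lambda>X0. Lim at_top (\<lambda>t. norm (Yf X0 t ** Xf X0 t - Uf X0 t) / norm (Uf X0 t)))
       \<and> integral\<^sup>L (gauss_matrix \<sigma>)
          (\<lambda>X0. Lim at_top (\<lambda>t. norm (Yf X0 t ** Xf X0 t - Uf X0 t) / norm (Uf X0 t)))
         \<le> sqrt ((real CARD('n) ^ 2 + real CARD('n) - 2) / (real CARD('n) * real CARD('r) + 2)))"
proof -
  define n where "n = real CARD('n)"
  define r where "r = real CARD('r)"
  have r1: "CARD('r) \<ge> 1" by (simp add: Suc_leI)
  have m2: "CARD('r) * CARD('n) \<ge> 2"
  proof -
    have "CARD('n) \<ge> 2" using r_lt_n r1 by linarith
    then show ?thesis using r1 by (metis mult_le_mono mult_1)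
  qed
  define R where "R X0 = sqrt (real CARD('n) * (norm (transpose X0 ** X0))\<^sup>2 - (norm X0) ^ 4) / (norm X0)\<^sup>2"
    for X0 :: "real^'n^'r"
  have R_alt: "R X0 = sqrt (n * Af X0 - Bf X0) / (norm X0)\<^sup>2" for X0
    by (simp add: R_def Af_def Bf_def n_def)
  show ?thesis
  proof (rule conjI)
    show "(\<forall>X0 :: real^'n^'r. norm X0 \<noteq> 0 \<longrightarrow> lora_gd_bounded W0 (0::real^'r^'n) X0 \<longrightarrow>
        full_flow W0 ((0::real^'r^'n) ** X0) (Uf X0) \<longrightarrow> lora_flow W0 0 X0 (Yf X0) (Xf X0) \<longrightarrow>
        ((\<lambda>t. norm (Yf X0 t ** Xf X0 t - Uf X0 t) / norm (Uf X0 t)) \<longlongrightarrow>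
           sqrt (real CARD('n) * (norm (transpose X0 ** X0))\<^sup>2 - (norm X0) ^ 4) / (norm X0)\<^sup>2) at_top)"
    proof (intro allI impI)
    fix X0 :: "real^'n^'r"
    assume "norm X0 \<noteq> 0" "lora_gd_bounded W0 (0::real^'r^'n) X0"
      "full_flow W0 ((0::real^'r^'n) ** X0) (Uf X0)" "lora_flow W0 0 X0 (Yf X0) (Xf X0)"
    then show "((\<lambda>t. norm (Yf X0 t ** Xf X0 t - Uf X0 t) / norm (Uf X0 t)) \<longlongrightarrow>
           sqrt (real CARD('n) * (norm (transpose X0 ** X0))\<^sup>2 - (norm X0) ^ 4) / (norm X0)\<^sup>2) at_top"
      using ratio_limit(1)[of W0 X0 "Yf X0" "Xf X0" "Uf X0"] trW0 by simp
    qed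
  next
    show "((\<sigma> > 0 \<and>
       (\<forall>X0 :: real^'n^'r. norm X0 \<noteq> 0 \<longrightarrow> lora_gd_bounded W0 (0::real^'r^'n) X0 \<and>
          full_flow W0 ((0::real^'r^'n) ** X0) (Uf X0) \<and> lora_flow W0 0 X0 (Yf X0) (Xf X0)))
      \<longrightarrow>
       integral\<^sup>L (gauss_matrix \<sigma>)
          (\<lambda>X0. Lim at_top (\<lambda>t. (norm (Yf X0 t ** Xf X0 t - Uf X0 t))\<^sup>2 / (norm (Uf X0 t))\<^sup>2))
         = (real CARD('n) ^ 2 + real CARD('n) - 2) / (real CARD('n) * real CARD('r) + 2)
       \<and> integrable (gauss_matrix \<sigma>)
          (\<lambda>X0. Lim at_top (\<lambda>t. norm (Yf X0 t ** Xf X0 t - Uf X0 t) / norm (Uf X0 t)))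
       \<and> integral\<^sup>L (gauss_matrix \<sigma>)
          (\<lambda>X0. Lim at_top (\<lambda>t. norm (Yf X0 t ** Xf X0 t - Uf X0 t) / norm (Uf X0 t)))
         \<le> sqrt ((real CARD('n) ^ 2 + real CARD('n) - 2) / (real CARD('n) * real CARD('r) + 2)))"
    proof (rule impI)
    assume H: "\<sigma> > 0 \<and>
       (\<forall>X0 :: real^'n^'r. norm X0 \<noteq> 0 \<longrightarrow> lora_gd_bounded W0 (0::real^'r^'n) X0 \<and>
          full_flow W0 ((0::real^'r^'n) ** X0) (Uf X0) \<and> lora_flow W0 0 X0 (Yf X0) (Xf X0))"
    then have \<sigma>: "\<sigma> > 0" by simp
    interpret G: prob_space "gauss_matrix \<sigma> :: (real^'n^'r) measure" by (rule prob_gm[OF \<sigma>])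
    define LR where "LR X0 = Lim at_top (\<lambda>t. norm (Yf X0 t ** Xf X0 t - Uf X0 t) / norm (Uf X0 t))" for X0
    define LS where "LS X0 = Lim at_top (\<lambda>t. (norm (Yf X0 t ** Xf X0 t - Uf X0 t))\<^sup>2 / (norm (Uf X0 t))\<^sup>2)" for X0
    define g where "g X = n * (Af X / Bf X) - 1" for X :: "real^'n^'r"
    have pt: "LR X0 = R X0 \<and> LS X0 = g X0 \<and> R X0 \<ge> 0 \<and> (R X0)\<^sup>2 = g X0" if nz: "X0 \<noteq> 0" for X0
    proof -
      have ff: "full_flow W0 0 (Uf X0)" and lf: "lora_flow W0 0 X0 (Yf X0) (Xf X0)"
        using H nz by auto
      note lim = ratio_limit(1)[OF lf ff nz trW0]
      have nn: "n * Af X0 - Bf X0 \<ge> 0"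
        using ratio_limit(2)[OF lf ff nz trW0] by (simp add: Af_def Bf_def n_def)
      have LRv: "LR X0 = R X0" unfolding LR_def R_def
        by (rule tendsto_Lim[OF trivial_limit_at_top_linorder lim])
      have eqs: "(\<lambda>t. (norm (Yf X0 t ** Xf X0 t - Uf X0 t))\<^sup>2 / (norm (Uf X0 t))\<^sup>2)
          = (\<lambda>t. (norm (Yf X0 t ** Xf X0 t - Uf X0 t) / norm (Uf X0 t))\<^sup>2)"
        by (simp add: power_divide)
      have LSv: "LS X0 = (R X0)\<^sup>2" unfolding LS_def eqs R_def
        by (rule tendsto_Lim[OF trivial_limit_at_top_linorder tendsto_power[OF lim]])
      have Bp: "Bf X0 > 0" using nz by (simp add: Bf_def)
      have "(R X0)\<^sup>2 = (n * Af X0 - Bf X0) / Bf X0"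
        using nn by (simp add: R_alt power_divide Bf_def power_mult[symmetric])
      also have "\<dots> = g X0" using Bp by (simp add: g_def field_simps)
      finally have Rg: "(R X0)\<^sup>2 = g X0" .
      have R0: "R X0 \<ge> 0" using nn by (simp add: R_alt)
      show ?thesis using LRv LSv Rg R0 by simp
    qed
    have AEnz: "AE X in gauss_matrix \<sigma>. X \<noteq> (0::real^'n^'r)" by (rule AE_gm_nz)
    have Rm[measurable]: "R \<in> borel_measurable borel"
      unfolding R_alt[abs_def] by measurable
    have gm[measurable]: "g \<in> borel_measurable borel"
      unfolding g_def[abs_def] by measurable
    have LRm: "LR \<in> borel_measurable (gauss_matrix \<sigma>)"
    proof -
      have "LR = (\<lambda>X. if X = 0 then LR 0 else R X)" using pt by (auto simp: fun_eq_iff)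
      also have "\<dots> \<in> borel_measurable (gauss_matrix \<sigma>)" by measurable
      finally show ?thesis .
    qed
    have LSm: "LS \<in> borel_measurable (gauss_matrix \<sigma>)"
    proof -
      have "LS = (\<lambda>X. if X = 0 then LS 0 else g X)" using pt by (auto simp: fun_eq_iff)
      also have "\<dots> \<in> borel_measurable (gauss_matrix \<sigma>)" by measurable
      finally show ?thesis .
    qed
    define \<kappa> where "\<kappa> = (real CARD('n) + real CARD('r) + 1) / (real CARD('r) * real CARD('n) + 2)"
    note ER = E_ratio[OF \<sigma> m2, folded \<kappa>_def]
    have ig: "integrable (gauss_matrix \<sigma>) g"
      unfolding g_def by (intro Bochner_Integration.integrable_diff integrable_mult_right ER(1)) simp
    have Eg: "integral\<^sup>L (gauss_matrix \<sigma>) g = n * \<kappa> - 1"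
    proof -
      have "integral\<^sup>L (gauss_matrix \<sigma>) g = integral\<^sup>L (gauss_matrix \<sigma>) (\<lambda>X::real^'n^'r. n * (Af X / Bf X)) - integral\<^sup>L (gauss_matrix \<sigma>) (\<lambda>X::real^'n^'r. 1::real)"
        unfolding g_def by (rule Bochner_Integration.integral_diff) (use integrable_mult_right[OF ER(1), of n] in auto)
      also have "integral\<^sup>L (gauss_matrix \<sigma>) (\<lambda>X::real^'n^'r. n * (Af X / Bf X)) = n * \<kappa>"
        using ER(2) by (simp only: integral_mult_right_zero)
      also have "integral\<^sup>L (gauss_matrix \<sigma>) (\<lambda>X::real^'n^'r. 1::real) = 1"
        by (simp add: G.prob_space)
      finally show ?thesis .
    qed
    define v where "v = (real CARD('n) ^ 2 + real CARD('n) - 2) / (real CARD('n) * real CARD('r) + 2)"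
    have vk: "n * \<kappa> - 1 = v"
    proof -
      have d: "real CARD('r) * real CARD('n) + 2 > 0" by (simp add: add_pos_nonneg)
      then show ?thesis unfolding v_def \<kappa>_def n_def
        by (simp add: field_simps power2_eq_square)
    qed
    have ELS: "integral\<^sup>L (gauss_matrix \<sigma>) LS = v"
    proof -
      have "integral\<^sup>L (gauss_matrix \<sigma>) LS = integral\<^sup>L (gauss_matrix \<sigma>) g"
        by (rule integral_cong_AE[OF LSm]) (use gm AEnz pt in \<open>auto elim!: AE_mp\<close>)
      then show ?thesis using Eg vk by simp
    qed
    have iLR: "integrable (gauss_matrix \<sigma>) LR"
    proof (rule Bochner_Integration.integrable_bound[OF _ LRm])
      show "integrable (gauss_matrix \<sigma>) (\<lambda>X. g X + 1)" using ig by simp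
      show "AE X in gauss_matrix \<sigma>. norm (LR X) \<le> norm (g X + 1)"
        using AEnz
      proof (rule AE_mp, intro AE_I2 impI)
        fix X :: "real^'n^'r" assume "X \<noteq> 0"
        with pt have "LR X = R X" "R X \<ge> 0" "(R X)\<^sup>2 = g X" by auto
        moreover have "R X \<le> 1 + (R X)\<^sup>2"
        proof -
          have "0 \<le> (R X - 1)\<^sup>2" by simp
          then have "2 * R X \<le> (R X)\<^sup>2 + 1" by (simp add: power2_diff algebra_simps)
          moreover have "0 \<le> (R X)\<^sup>2" by simp
          ultimately show ?thesis by linarith
        qed
        ultimately show "norm (LR X) \<le> norm (g X + 1)" by simp
      qed
    qed
    have vpos: "v > 0"
    proof -
      have "CARD('n) \<ge> 2" using r_lt_n r1 by linarith
      then have "real CARD('n) \<ge> 2" by simp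
      then have "real CARD('n) * real CARD('n) \<ge> 2 * 2" by (intro mult_mono) auto
      then have "real CARD('n) ^ 2 + real CARD('n) - 2 > 0" using \<open>real CARD('n) \<ge> 2\<close> by (simp add: power2_eq_square)
      then show ?thesis unfolding v_def by (simp add: add_pos_nonneg)
    qed
    define \<mu> where "\<mu> = sqrt v"
    have \<mu>p: "\<mu> > 0" using vpos by (simp add: \<mu>_def)
    have \<mu>2: "\<mu>\<^sup>2 = v" using vpos by (simp add: \<mu>_def)
    have "integral\<^sup>L (gauss_matrix \<sigma>) LR \<le> integral\<^sup>L (gauss_matrix \<sigma>) (\<lambda>X. (g X + \<mu>\<^sup>2) / (2 * \<mu>))"
    proof (rule integral_mono_AE[OF iLR])
      show "integrable (gauss_matrix \<sigma>) (\<lambda>X. (g X + \<mu>\<^sup>2) / (2 * \<mu>))"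
        using ig by (intro integrable_divide Bochner_Integration.integrable_add) auto
      show "AE X in gauss_matrix \<sigma>. LR X \<le> (g X + \<mu>\<^sup>2) / (2 * \<mu>)"
        using AEnz
      proof (rule AE_mp, intro AE_I2 impI)
        fix X :: "real^'n^'r" assume "X \<noteq> 0"
        with pt have e: "LR X = R X" "(R X)\<^sup>2 = g X" by auto
        have "0 \<le> (R X - \<mu>)\<^sup>2" by simp
        then have "2 * \<mu> * R X \<le> (R X)\<^sup>2 + \<mu>\<^sup>2" by (simp add: power2_diff algebra_simps)
        then show "LR X \<le> (g X + \<mu>\<^sup>2) / (2 * \<mu>)" using e \<mu>p by (simp add: field_simps)
      qed
    qed
    also have "\<dots> = (v + \<mu>\<^sup>2) / (2 * \<mu>)"
      using ig ELS Eg vk by (simp add: G.prob_space)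
    also have "\<dots> = \<mu>" using \<mu>2 \<mu>p by (simp add: field_simps power2_eq_square)
    finally have bnd: "integral\<^sup>L (gauss_matrix \<sigma>) LR \<le> sqrt v" by (simp add: \<mu>_def)
    show "integral\<^sup>L (gauss_matrix \<sigma>)
          (\<lambda>X0. Lim at_top (\<lambda>t. (norm (Yf X0 t ** Xf X0 t - Uf X0 t))\<^sup>2 / (norm (Uf X0 t))\<^sup>2))
         = (real CARD('n) ^ 2 + real CARD('n) - 2) / (real CARD('n) * real CARD('r) + 2)
       \<and> integrable (gauss_matrix \<sigma>)
          (\<lambda>X0. Lim at_top (\<lambda>t. norm (Yf X0 t ** Xf X0 t - Uf X0 t) / norm (Uf X0 t)))
       \<and> integral\<^sup>L (gauss_matrix \<sigma>)
          (\<lambda>X0. Lim at_top (\<lambda>t. norm (Yf X0 t ** Xf X0 t - Uf X0 t) / norm (Uf X0 t)))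
         \<le> sqrt ((real CARD('n) ^ 2 + real CARD('n) - 2) / (real CARD('n) * real CARD('r) + 2))"
      using ELS iLR bnd unfolding LS_def[abs_def] LR_def[abs_def] v_def by simp
    qed
  qed
qed


end
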